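(* Let $s_0,s_1,s_2\ge0$ with $s_0+s_1+s_2>\frac12$ and let $b>\frac12$. Then there is $C>0$ such that for all sufficiently regular $u,v$ (e.g. $J_y^{s_1}u,\,J_y^{s_2}v\in X^{0,b}$), \[ \|J_y^{-s_0}I_x^{1/2}I_{x,-}^{1/2}(u,v)\|_{L^2_{t,x,y}}\le C\|J_y^{s_1}u\|_{0,b}\|J_y^{s_2}v\|_{0,b}. \] The same estimate holds with $x$ and $y$ interchanged, i.e. $\|J_x^{-s_0}I_y^{1/2}I_{y,-}^{1/2}(u,v)\|_{L^2_{t,x,y}}\le C\|J_x^{s_1}u\|_{0,b}\|J_x^{s_2}v\|_{0,b}$.
   Context: Notation: $\langle a\rangle=(1+|a|^2)^{1/2}$; $(\tau,\xi,\eta)$ are the Fourier variables dual to $(t,x,y)$, $\widehat u$ is the space-time Fourier transform. $X^{s,b}$ is the space of tempered distributions $u$ on $\mathbb{R}\times\mathbb{R}^2$ with $\widehat u\in L^2_{loc}$ and $\|u\|_{s,b}=\|\langle\tau-\xi^3-\eta^3\rangle^b\langle(\xi,\eta)\rangle^s\widehat u\|_{L^2_{\tau\xi\eta}}<\infty$. $J_y^{s}$ is the Fourier multiplier with symbol $\langle\eta\rangle^{s}$ and $J_x^s$ the one with symbol $\langle\xi\rangle^s$; $I_x^{1/2}$ has symbol $|\xi|^{1/2}$ and $I_y^{1/2}$ symbol $|\eta|^{1/2}$. $I_{x,-}^{1/2}$ (resp. $I_{y,-}^{1/2}$) is the bilinear operator acting in the space variables by $\mathcal F_{x,y}(A(f_1,f_2))(\xi,\eta)=\int_{\xi_1+\xi_2=\xi,\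 \eta_1+\eta_2=\eta}a\,\widehat{f_1}(\xi_1,\eta_1)\widehat{f_2}(\xi_2,\eta_2)\,d\xi_1d\eta_1$ with $a=|\xi_1-\xi_2|^{1/2}$ (resp. $a=|\eta_1-\eta_2|^{1/2}$). *)

theory Defs
  imports "HOL-Analysis.Analysis"
begin

text \<open>Space-time frequency variables (tau, xi, eta), all real.
  Functions below are Fourier-side objects: f stands for the space-time
  Fourier transform of u.\<close>

type_synonym freq = "real \<times> real \<times> real"

definition japan :: "real \<Rightarrow> real" where
  "japan a = sqrt (1 + a\<^sup>2)"

text \<open>Squared X^{0,b} norm of the function whose Fourier transform is f, after
  applying the Fourier multiplier with symbol m (e.g. m = japan of eta to the s).\<close>
definition X0b_sq :: "real \<Rightarrow> (freq \<Rightarrow> real) \<Rightarrow> (freq \<Rightarrow> complex) \<Rightarrow> ennreal" where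
  "X0b_sq b m f = (\<integral>\<^sup>+ p. ennreal ((japan (fst p - (fst (snd p))^3 - (snd (snd p))^3) powr b
        * m p * norm (f p))\<^sup>2) \<partial>lborel)"

text \<open>Squared L^2 norm (on the Fourier side; equals the L^2_{t,x,y} norm up to a
  constant by Plancherel).\<close>
definition L2_sq :: "(freq \<Rightarrow> complex) \<Rightarrow> ennreal" where
  "L2_sq f = (\<integral>\<^sup>+ p. ennreal ((norm (f p))\<^sup>2) \<partial>lborel)"

text \<open>Fourier transform (up to a normalising constant) of
  J_y^{-s0} I_x^{1/2} I_{x,-}^{1/2}(u,v), where f, g are the Fourier transforms of u, v:
  the product in time becomes a convolution in tau, the bilinear operator a convolution
  in (xi,eta) with weight |xi1 - xi2|^{1/2}.\<close>
definition bil_x :: "real \<Rightarrow> (freq \<Rightarrow> complex) \<Rightarrow> (freq \<Rightarrow> complex) \<Rightarrow> freq \<Rightarrow> complex" where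
  "bil_x s0 f g p = (case p of (\<tau>, \<xi>, \<eta>) \<Rightarrow>
     complex_of_real (japan \<eta> powr (- s0) * sqrt \<bar>\<xi>\<bar>) *
     (\<integral> q. (case q of (\<tau>1, \<xi>1, \<eta>1) \<Rightarrow>
        complex_of_real (sqrt \<bar>\<xi>1 - (\<xi> - \<xi>1)\<bar>) * f (\<tau>1, \<xi>1, \<eta>1)
          * g (\<tau> - \<tau>1, \<xi> - \<xi>1, \<eta> - \<eta>1)) \<partial>lborel))"

definition bil_y :: "real \<Rightarrow> (freq \<Rightarrow> complex) \<Rightarrow> (freq \<Rightarrow> complex) \<Rightarrow> freq \<Rightarrow> complex" where
  "bil_y s0 f g p = (case p of (\<tau>, \<xi>, \<eta>) \<Rightarrow>
     complex_of_real (japan \<xi> powr (- s0) * sqrt \<bar>\<eta>\<bar>) *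
     (\<integral> q. (case q of (\<tau>1, \<xi>1, \<eta>1) \<Rightarrow>
        complex_of_real (sqrt \<bar>\<eta>1 - (\<eta> - \<eta>1)\<bar>) * f (\<tau>1, \<xi>1, \<eta>1)
          * g (\<tau> - \<tau>1, \<xi> - \<xi>1, \<eta> - \<eta>1)) \<partial>lborel))"

end

theory Submission
  imports Defs "HOL-Analysis.Analysis"
begin

lemma japan_pos: "japan a > 0" unfolding japan_def by (simp add: add_pos_nonneg)
lemma japan_ge1: "japan a \<ge> 1" unfolding japan_def by simp
lemma japan_ge_abs: "japan a \<ge> \<bar>a\<bar>" unfolding japan_def
  by (metis abs_le_square_iff abs_of_nonneg le_add_same_cancel2 real_sqrt_abs real_sqrt_ge_zero real_sqrt_le_iff zero_le_one)
lemma japan_minus[simp]: "japan (- a) = japan a" unfolding japan_def by simp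
lemma japan_cont[continuous_intros]: "continuous_on A (\<lambda>x. japan (f x))" if "continuous_on A f"
  unfolding japan_def by (intro continuous_intros that)
lemma japan_meas[measurable]: "japan \<in> borel_measurable borel"
  unfolding japan_def by measurable

lemma nn_affine:
  fixes h :: "'a::euclidean_space \<Rightarrow> ennreal"
  assumes h[measurable]: "h \<in> borel_measurable borel" and c: "c = 1 \<or> c = -1"
  shows "(\<integral>\<^sup>+x. h (t + c *\<^sub>R x) \<partial>lborel) = (\<integral>\<^sup>+x. h x \<partial>lborel)"
proof -
  have c0: "c \<noteq> 0" and ac: "\<bar>c\<bar> = 1" using c by auto
  have "(\<integral>\<^sup>+x. h x \<partial>lborel) = (\<integral>\<^sup>+x. h x \<partial>(density (distr lborel borel (\<lambda>x. t + c *\<^sub>R x)) (\<lambda>_. \<bar>c\<bar>^DIM('a))))"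
    using lborel_affine[OF c0, of t] by simp
  also have "\<dots> = (\<integral>\<^sup>+x. h x \<partial>(distr lborel borel (\<lambda>x. t + c *\<^sub>R x)))"
    by (simp add: ac density_1)
  also have "\<dots> = (\<integral>\<^sup>+x. h (t + c *\<^sub>R x) \<partial>lborel)"
    by (subst nn_integral_distr) auto
  finally show ?thesis ..
qed

lemma nn_trans:
  fixes h :: "'a::euclidean_space \<Rightarrow> ennreal"
  assumes h[measurable]: "h \<in> borel_measurable borel"
  shows "(\<integral>\<^sup>+x. h (t + x) \<partial>lborel) = (\<integral>\<^sup>+x. h x \<partial>lborel)"
  using nn_affine[OF h, of 1 t] by simp

lemma nn_trans':
  fixes h :: "'a::euclidean_space \<Rightarrow> ennreal"
  assumes h[measurable]: "h \<in> borel_measurable borel"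
  shows "(\<integral>\<^sup>+x. h (x - t) \<partial>lborel) = (\<integral>\<^sup>+x. h x \<partial>lborel)"
  using nn_trans[OF h, of "-t"] by (simp add: add.commute)

lemma nn_refl:
  fixes h :: "'a::euclidean_space \<Rightarrow> ennreal"
  assumes h[measurable]: "h \<in> borel_measurable borel"
  shows "(\<integral>\<^sup>+x. h (t - x) \<partial>lborel) = (\<integral>\<^sup>+x. h x \<partial>lborel)"
  using nn_affine[OF h, of "-1" t] by simp

lemma nn_pair:
  fixes h :: "'a::euclidean_space \<times> 'b::euclidean_space \<Rightarrow> ennreal"
  assumes h[measurable]: "h \<in> borel_measurable borel"
  shows "(\<integral>\<^sup>+x. h x \<partial>lborel) = (\<integral>\<^sup>+a. \<integral>\<^sup>+b. h (a, b) \<partial>lborel \<partial>lborel)"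
proof -
  have "(\<integral>\<^sup>+x. h x \<partial>lborel) = (\<integral>\<^sup>+x. h x \<partial>(lborel \<Otimes>\<^sub>M lborel))"
    by (simp add: lborel_prod)
  also have "\<dots> = (\<integral>\<^sup>+a. \<integral>\<^sup>+b. h (a, b) \<partial>lborel \<partial>lborel)"
    by (rule lborel.nn_integral_fst[symmetric]) (simp add: lborel_prod)
  finally show ?thesis .
qed

lemma nn_swap:
  fixes h :: "'a::euclidean_space \<Rightarrow> 'b::euclidean_space \<Rightarrow> ennreal"
  assumes h: "(\<lambda>x. h (fst x) (snd x)) \<in> borel_measurable borel"
  shows "(\<integral>\<^sup>+a. \<integral>\<^sup>+b. h a b \<partial>lborel \<partial>lborel) = (\<integral>\<^sup>+b. \<integral>\<^sup>+a. h a b \<partial>lborel \<partial>lborel)"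
proof -
  have "case_prod h \<in> borel_measurable (lborel \<Otimes>\<^sub>M lborel)"
    using h by (simp add: lborel_prod case_prod_beta')
  then show ?thesis by (rule lborel_pair.Fubini'[symmetric])
qed

lemma powr_tail_integral:
  fixes r :: real assumes r: "r > 1"
  shows "(\<integral>\<^sup>+x. ennreal (x powr (-r) * indicator {1..} x) \<partial>lborel) = ennreal (1/(r-1))"
proof -
  have "((\<lambda>x. x powr (-r)) has_integral -(1 powr (-r+1)) / (-r+1)) {1..}"
    by (rule has_integral_powr_to_inf) (use r in auto)
  moreover have "- (1 powr (-r+1)) / (-r+1) = 1/(r-1)" using r by (simp add: field_simps)
  ultimately have "((\<lambda>x. x powr (-r)) has_integral 1/(r-1)) {1..}"
    by simp
  then have "((\<lambda>x. if x \<in> {1..} then x powr (-r) else 0) has_integral 1/(r-1)) UNIV"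
    by (subst has_integral_restrict_UNIV)
  moreover have "(\<lambda>x. x powr (-r) * indicator {1..} x) = (\<lambda>x. if x \<in> {1..} then x powr (-r) else 0)"
    by (auto simp: indicator_def)
  ultimately have I: "((\<lambda>x. x powr (-r) * indicator {1..} x) has_integral 1/(r-1)) UNIV" by simp
  show ?thesis
    by (rule nn_integral_has_integral_lborel[OF _ _ I]) (auto simp: indicator_def)
qed

lemma japan_powr_int:
  fixes r :: real assumes r: "r > 1"
  shows "(\<integral>\<^sup>+x. ennreal (japan x powr (-r)) \<partial>lborel) < \<infinity>"
proof -
  define e where "e x = ennreal (x powr (-r) * indicator {1..} x)" for x :: real
  define i where "i x = (indicator {-1..1::real} x :: ennreal)" for x :: real
  have [measurable]: "e \<in> borel_measurable borel" "i \<in> borel_measurable borel"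
    unfolding e_def[abs_def] i_def[abs_def] by measurable
  have pt: "ennreal (japan x powr (-r)) \<le> i x + e x + e (0 - x)" for x
  proof (cases "x \<ge> 1")
    case True
    then have "japan x powr (-r) \<le> x powr (-r)"
      using japan_ge_abs[of x] r by (intro powr_mono2') auto
    then have "ennreal (japan x powr (-r)) \<le> e x"
      using True by (auto simp: indicator_def e_def intro: ennreal_leI)
    also have "e x \<le> i x + e x"
      by (rule add_increasing) auto
    also have "\<dots> \<le> i x + e x + e (0 - x)"
      by (rule add_increasing2) auto
    finally show ?thesis .
  next
    case False
    show ?thesis
    proof (cases "x \<le> -1")
      case True
      then have "japan x powr (-r) \<le> (-x) powr (-r)"
        using japan_ge_abs[of x] r by (intro powr_mono2') auto
      then show ?thesis using True by (auto simp: indicator_def e_def intro!: add_increasing)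
    next
      case F2: False
      have "japan x powr (-r) \<le> 1 powr (-r)"
        using japan_ge1[of x] r by (intro powr_mono2') auto
      then show ?thesis using False F2 by (auto simp: indicator_def i_def e_def intro!: add_increasing2)
    qed
  qed
  have "(\<integral>\<^sup>+x. ennreal (japan x powr (-r)) \<partial>lborel) \<le> (\<integral>\<^sup>+x. i x + e x + e (0 - x) \<partial>lborel)"
    by (rule nn_integral_mono) (rule pt)
  also have "\<dots> = (\<integral>\<^sup>+x. i x \<partial>lborel) + (\<integral>\<^sup>+x. e x \<partial>lborel) + (\<integral>\<^sup>+x. e (0 - x) \<partial>lborel)"
    by (simp add: nn_integral_add)
  also have "(\<integral>\<^sup>+x. e (0 - x) \<partial>lborel) = (\<integral>\<^sup>+x. e x \<partial>lborel)"
    by (rule nn_refl) simp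
  also have "(\<integral>\<^sup>+x. i x \<partial>lborel) = 2" by (simp add: i_def)
  also have "(\<integral>\<^sup>+x. e x \<partial>lborel) = ennreal (1/(r-1))"
    using powr_tail_integral[OF r] by (simp add: e_def)
  finally have "(\<integral>\<^sup>+x. ennreal (japan x powr (-r)) \<partial>lborel) \<le> 2 + ennreal (1/(r-1)) + ennreal (1/(r-1))" .
  also have "\<dots> < \<infinity>" by (simp add: less_top[symmetric])
  finally show ?thesis .
qed

lemma sup_indicator_nat:
  fixes F :: "real \<Rightarrow> ennreal"
  shows "(SUP n::nat. F t * indicator {0..real n + 1} t) = F t * indicator {0..} t"
proof (cases "t \<ge> 0")
  case True
  show ?thesis
  proof (rule antisym)
    show "(SUP n::nat. F t * indicator {0..real n + 1} t) \<le> F t * indicator {0..} t"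
      by (rule SUP_least) (auto simp: indicator_def)
    obtain n :: nat where "t \<le> real n + 1" using real_arch_simple[of t] by (metis add_increasing2 zero_le_one)
    then have "F t * indicator {0..} t = F t * indicator {0..real n + 1} t" using True by (auto simp: indicator_def)
    also have "\<dots> \<le> (SUP n::nat. F t * indicator {0..real n + 1} t)" by (rule SUP_upper) auto
    finally show "F t * indicator {0..} t \<le> (SUP n::nat. F t * indicator {0..real n + 1} t)" .
  qed
qed (auto simp: indicator_def)

lemma half_line_subst:
  fixes f :: "real \<Rightarrow> ennreal" and c :: real
  assumes f[measurable]: "f \<in> borel_measurable borel" and c: "c > 0"
  shows "(\<integral>\<^sup>+t. f (c * t\<^sup>2) * ennreal (2 * c * t) * indicator {0..} t \<partial>lborel) \<le> (\<integral>\<^sup>+v. f v \<partial>lborel)"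
proof -
  define F where "F t = f (c * t\<^sup>2) * ennreal (2 * c * t)" for t
  have [measurable]: "F \<in> borel_measurable borel" unfolding F_def[abs_def] by measurable
  have "(\<integral>\<^sup>+t. F t * indicator {0..} t \<partial>lborel) = (\<integral>\<^sup>+t. (SUP n::nat. F t * indicator {0..real n + 1} t) \<partial>lborel)"
    by (simp add: sup_indicator_nat)
  also have "\<dots> = (SUP n::nat. \<integral>\<^sup>+t. F t * indicator {0..real n + 1} t \<partial>lborel)"
    by (rule nn_integral_monotone_convergence_SUP)
       (auto simp: incseq_def le_fun_def indicator_def intro!: mult_left_mono)
  also have "\<dots> \<le> (\<integral>\<^sup>+v. f v \<partial>lborel)"
  proof (rule SUP_least)
    fix n :: nat
    have "(\<integral>\<^sup>+t. F t * indicator {0..real n + 1} t \<partial>lborel)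
        = (\<integral>\<^sup>+x. f x * indicator {c * 0\<^sup>2..c * (real n + 1)\<^sup>2} x \<partial>lborel)"
      unfolding F_def
      by (rule nn_integral_substitution_aux[symmetric, where g' = "\<lambda>t. 2 * c * t"])
         (use c in \<open>auto intro!: derivative_eq_intros continuous_intros\<close>)
    also have "\<dots> \<le> (\<integral>\<^sup>+v. f v \<partial>lborel)"
      by (rule nn_integral_mono) (auto simp: indicator_def)
    finally show "(\<integral>\<^sup>+t. F t * indicator {0..real n + 1} t \<partial>lborel) \<le> (\<integral>\<^sup>+v. f v \<partial>lborel)" .
  qed
  finally show ?thesis unfolding F_def .
qed


lemma core_1d:
  fixes r \<xi> E :: real
  shows "(\<integral>\<^sup>+x. ennreal (\<bar>\<xi>\<bar> * \<bar>2*x - \<xi>\<bar> * japan (E - x^3 - (\<xi> - x)^3) powr (-r)) \<partial>lborel)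
     \<le> ennreal (2/3) * (\<integral>\<^sup>+v. ennreal (japan v powr (-r)) \<partial>lborel)"
proof (cases "\<xi> = 0")
  case True then show ?thesis by simp
next
  case False
  define E' where "E' = E - \<xi>^3/4"
  define \<sigma> where "\<sigma> = sgn \<xi>"
  define c where "c = 3 * \<bar>\<xi>\<bar>"
  have c: "c > 0" using False by (simp add: c_def)
  have \<sigma>: "\<sigma> = 1 \<or> \<sigma> = -1" using False by (auto simp: \<sigma>_def sgn_real_def)
  have \<sigma>c: "3 * \<xi> = \<sigma> * c" by (simp add: \<sigma>_def c_def sgn_mult_abs)
  define Jr where "Jr v = ennreal (japan v powr (-r))" for v
  have [measurable]: "Jr \<in> borel_measurable borel" unfolding Jr_def[abs_def] by measurable
  define f where "f v = Jr (E' + (-\<sigma>) *\<^sub>R v)" for v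
  have [measurable]: "f \<in> borel_measurable borel" unfolding f_def[abs_def] by measurable
  have fI: "(\<integral>\<^sup>+v. f v \<partial>lborel) = (\<integral>\<^sup>+v. Jr v \<partial>lborel)"
    unfolding f_def by (rule nn_affine) (use \<sigma> in auto)
  define P where "P t = ennreal (\<bar>\<xi>\<bar> * (2*t) * japan (E' - 3*\<xi>*t\<^sup>2) powr (-r)) * indicator {0..} t" for t
  have [measurable]: "P \<in> borel_measurable borel" unfolding P_def[abs_def] by measurable
  have "(\<integral>\<^sup>+x. ennreal (\<bar>\<xi>\<bar> * \<bar>2*x - \<xi>\<bar> * japan (E - x^3 - (\<xi> - x)^3) powr (-r)) \<partial>lborel)
      = (\<integral>\<^sup>+t. ennreal (\<bar>\<xi>\<bar> * \<bar>2*(\<xi>/2 + t) - \<xi>\<bar> * japan (E - (\<xi>/2 + t)^3 - (\<xi> - (\<xi>/2 + t))^3) powr (-r)) \<partial>lborel)"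
    by (rule nn_trans[symmetric, where h = "\<lambda>x. ennreal (\<bar>\<xi>\<bar> * \<bar>2*x - \<xi>\<bar> * japan (E - x^3 - (\<xi> - x)^3) powr (-r))"]) measurable
  also have "\<dots> = (\<integral>\<^sup>+t. ennreal (\<bar>\<xi>\<bar> * \<bar>2*t\<bar> * japan (E' - 3*\<xi>*t\<^sup>2) powr (-r)) \<partial>lborel)"
  proof (rule nn_integral_cong)
    fix t :: real
    have "E - (\<xi>/2 + t)^3 - (\<xi> - (\<xi>/2 + t))^3 = E' - 3*\<xi>*t\<^sup>2"
      unfolding E'_def by (simp add: power3_eq_cube power2_eq_square field_simps)
    moreover have "2*(\<xi>/2 + t) - \<xi> = 2*t" by simp
    ultimately show "ennreal (\<bar>\<xi>\<bar> * \<bar>2*(\<xi>/2 + t) - \<xi>\<bar> * japan (E - (\<xi>/2 + t)^3 - (\<xi> - (\<xi>/2 + t))^3) powr (-r))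
      = ennreal (\<bar>\<xi>\<bar> * \<bar>2*t\<bar> * japan (E' - 3*\<xi>*t\<^sup>2) powr (-r))" by simp
  qed
  also have "\<dots> \<le> (\<integral>\<^sup>+t. P t + P (0 - t) \<partial>lborel)"
  proof (rule nn_integral_mono)
    fix t :: real
    show "ennreal (\<bar>\<xi>\<bar> * \<bar>2*t\<bar> * japan (E' - 3*\<xi>*t\<^sup>2) powr (-r)) \<le> P t + P (0 - t)"
    proof (cases "t \<ge> 0")
      case True
      then show ?thesis by (auto simp: P_def intro!: add_increasing2)
    next
      case False
      then show ?thesis by (auto simp: P_def intro!: add_increasing)
    qed
  qed
  also have "\<dots> = (\<integral>\<^sup>+t. P t \<partial>lborel) + (\<integral>\<^sup>+t. P (0 - t) \<partial>lborel)"
    by (rule nn_integral_add) auto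
  also have "(\<integral>\<^sup>+t. P (0 - t) \<partial>lborel) = (\<integral>\<^sup>+t. P t \<partial>lborel)"
    by (rule nn_refl) simp
  also have "(\<integral>\<^sup>+t. P t \<partial>lborel) = (\<integral>\<^sup>+t. ennreal (1/3) * (f (c * t\<^sup>2) * ennreal (2 * c * t) * indicator {0..} t) \<partial>lborel)"
  proof (rule nn_integral_cong)
    fix t :: real
    show "P t = ennreal (1/3) * (f (c * t\<^sup>2) * ennreal (2 * c * t) * indicator {0..} t)"
    proof (cases "t \<ge> 0")
      case True
      have e: "E' + (-\<sigma>) *\<^sub>R (c * t\<^sup>2) = E' - 3*\<xi>*t\<^sup>2" using \<sigma>c by (simp add: algebra_simps)
      have "\<bar>\<xi>\<bar> * (2*t) = 1/3 * (2 * c * t)" by (simp add: c_def)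
      have e2: "\<xi> * (3 * t\<^sup>2) = \<sigma> * (c * t\<^sup>2)" using \<sigma>c by (simp add: algebra_simps)
      have e3: "\<bar>\<xi>\<bar> * 3 = c" by (simp add: c_def)
      show ?thesis using True c
        by (simp add: P_def f_def Jr_def e e2 e3 ennreal_mult'[symmetric] mult_ac)
    next
      case False then show ?thesis by (simp add: P_def)
    qed
  qed
  also have "\<dots> = ennreal (1/3) * (\<integral>\<^sup>+t. f (c * t\<^sup>2) * ennreal (2 * c * t) * indicator {0..} t \<partial>lborel)"
    by (rule nn_integral_cmult) measurable
  also have "\<dots> \<le> ennreal (1/3) * (\<integral>\<^sup>+v. f v \<partial>lborel)"
    by (intro mult_left_mono half_line_subst c) auto
  finally have A: "(\<integral>\<^sup>+x. ennreal (\<bar>\<xi>\<bar> * \<bar>2*x - \<xi>\<bar> * japan (E - x^3 - (\<xi> - x)^3) powr (-r)) \<partial>lborel)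
     \<le> ennreal (1/3) * (\<integral>\<^sup>+v. f v \<partial>lborel) + ennreal (1/3) * (\<integral>\<^sup>+v. f v \<partial>lborel)"
    by (meson add_mono)
  have "ennreal (1/3) + ennreal (1/3) = ennreal (2/3)"
    by (subst ennreal_plus[symmetric]) auto
  then have "ennreal (1/3) * (\<integral>\<^sup>+v. f v \<partial>lborel) + ennreal (1/3) * (\<integral>\<^sup>+v. f v \<partial>lborel)
      = ennreal (2/3) * (\<integral>\<^sup>+v. Jr v \<partial>lborel)"
    by (simp add: fI flip: distrib_right)
  with A show ?thesis by (simp add: Jr_def)
qed

lemma nn_pair':
  fixes h :: "'a::euclidean_space \<times> 'b::euclidean_space \<Rightarrow> ennreal"
  assumes h[measurable]: "h \<in> borel_measurable (lborel \<Otimes>\<^sub>M lborel)"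
  shows "(\<integral>\<^sup>+x. h x \<partial>lborel) = (\<integral>\<^sup>+a. \<integral>\<^sup>+b. h (a, b) \<partial>lborel \<partial>lborel)"
  using nn_pair[of h] h by (simp add: lborel_prod)

lemma nn_swap':
  fixes h :: "'a::euclidean_space \<Rightarrow> 'b::euclidean_space \<Rightarrow> ennreal"
  assumes h: "case_prod h \<in> borel_measurable (lborel \<Otimes>\<^sub>M lborel)"
  shows "(\<integral>\<^sup>+a. \<integral>\<^sup>+b. h a b \<partial>lborel \<partial>lborel) = (\<integral>\<^sup>+b. \<integral>\<^sup>+a. h a b \<partial>lborel \<partial>lborel)"
  using h by (rule lborel_pair.Fubini'[symmetric])

definition Jr :: "real \<Rightarrow> real \<Rightarrow> ennreal" where
  "Jr r v = ennreal (japan v powr (-r))"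

lemma Jr_meas[measurable]: "Jr r \<in> borel_measurable borel"
  unfolding Jr_def[abs_def] by measurable

definition IJ :: "real \<Rightarrow> ennreal" where
  "IJ r = (\<integral>\<^sup>+v. Jr r v \<partial>lborel)"

lemma IJ_fin: "r > 1 \<Longrightarrow> IJ r < \<infinity>"
  unfolding IJ_def Jr_def by (rule japan_powr_int)

lemma core_1d':
  "(\<integral>\<^sup>+x. ennreal (\<bar>\<xi>\<bar> * \<bar>2*x - \<xi>\<bar>) * Jr r (E - x^3 - (\<xi> - x)^3) \<partial>lborel) \<le> ennreal (2/3) * IJ r"
  using core_1d[of \<xi> E r] unfolding IJ_def Jr_def
  by (simp add: ennreal_mult'[symmetric] mult.assoc)

lemma core_2d:
  "(\<integral>\<^sup>+x. ennreal (\<bar>\<xi>\<bar> * \<bar>2 * snd x - \<xi>\<bar>) * Jr r (fst x - snd x^3 - c1) * Jr r (\<tau> - fst x - (\<xi> - snd x)^3 - c2) \<partial>lborel)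
    \<le> ennreal (2/3) * IJ r * IJ r"
proof -
  let ?w = "\<lambda>y::real. ennreal (\<bar>\<xi>\<bar> * \<bar>2 * y - \<xi>\<bar>)"
  have "(\<integral>\<^sup>+x. ?w (snd x) * Jr r (fst x - snd x^3 - c1) * Jr r (\<tau> - fst x - (\<xi> - snd x)^3 - c2) \<partial>lborel)
     = (\<integral>\<^sup>+t. \<integral>\<^sup>+y. ?w y * Jr r (t - y^3 - c1) * Jr r (\<tau> - t - (\<xi> - y)^3 - c2) \<partial>lborel \<partial>lborel)"
    by (subst nn_pair') measurable
  also have "\<dots> = (\<integral>\<^sup>+y. \<integral>\<^sup>+t. ?w y * Jr r (t - y^3 - c1) * Jr r (\<tau> - t - (\<xi> - y)^3 - c2) \<partial>lborel \<partial>lborel)"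
    by (rule nn_swap') measurable
  also have "\<dots> = (\<integral>\<^sup>+y. \<integral>\<^sup>+u. ?w y * Jr r u * Jr r (\<tau> - c1 - c2 - u - y^3 - (\<xi> - y)^3) \<partial>lborel \<partial>lborel)"
  proof (rule nn_integral_cong)
    fix y :: real
    show "(\<integral>\<^sup>+t. ?w y * Jr r (t - y^3 - c1) * Jr r (\<tau> - t - (\<xi> - y)^3 - c2) \<partial>lborel)
       = (\<integral>\<^sup>+u. ?w y * Jr r u * Jr r (\<tau> - c1 - c2 - u - y^3 - (\<xi> - y)^3) \<partial>lborel)"
      by (subst nn_trans[symmetric, where t = "y^3 + c1"]) (measurable, simp add: algebra_simps)
  qed
  also have "\<dots> = (\<integral>\<^sup>+u. \<integral>\<^sup>+y. Jr r u * (?w y * Jr r (\<tau> - c1 - c2 - u - y^3 - (\<xi> - y)^3)) \<partial>lborel \<partial>lborel)"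
    by (subst nn_swap') (measurable, simp add: mult_ac)
  also have "\<dots> = (\<integral>\<^sup>+u. Jr r u * \<integral>\<^sup>+y. ?w y * Jr r (\<tau> - c1 - c2 - u - y^3 - (\<xi> - y)^3) \<partial>lborel \<partial>lborel)"
    by (rule nn_integral_cong) (rule nn_integral_cmult, measurable)
  also have "\<dots> \<le> (\<integral>\<^sup>+u. Jr r u * (ennreal (2/3) * IJ r) \<partial>lborel)"
    by (intro nn_integral_mono mult_left_mono core_1d') auto
  also have "\<dots> = ennreal (2/3) * IJ r * IJ r"
    by (subst nn_integral_multc) (auto simp: IJ_def mult_ac)
  finally show ?thesis .
qed

abbreviation M2 :: "(real \<times> real) measure" where "M2 \<equiv> lborel \<Otimes>\<^sub>M lborel"
abbreviation M3 :: "freq measure" where "M3 \<equiv> lborel \<Otimes>\<^sub>M M2"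

abbreviation B2 :: "(real \<times> real) measure" where "B2 \<equiv> borel \<Otimes>\<^sub>M borel"
abbreviation B3 :: "freq measure" where "B3 \<equiv> borel \<Otimes>\<^sub>M B2"

lemma lborel3: "(lborel :: freq measure) = M3" by (simp add: lborel_prod)
lemma lborel2: "(lborel :: (real \<times> real) measure) = M2" by (simp add: lborel_prod)

lemma sf_M2: "sigma_finite_measure M2"
  by (simp add: lborel_prod lborel.sigma_finite_measure_axioms)
lemma sf_M3: "sigma_finite_measure M3"
  using lborel3 lborel.sigma_finite_measure_axioms[where 'a=freq] by simp

lemma psf_M2M2: "pair_sigma_finite M2 M2" by (simp add: pair_sigma_finite_def sf_M2)
lemma psf_M3M3: "pair_sigma_finite M3 M3" by (simp add: pair_sigma_finite_def sf_M3)
lemma psf_M2L: "pair_sigma_finite M2 lborel" by (simp add: pair_sigma_finite_def sf_M2 lborel.sigma_finite_measure_axioms)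
lemma psf_LM2: "pair_sigma_finite lborel M2" by (simp add: pair_sigma_finite_def sf_M2 lborel.sigma_finite_measure_axioms)

lemma It2:
  assumes [measurable]: "h \<in> borel_measurable B2"
  shows "(\<integral>\<^sup>+x. h x \<partial>M2) = (\<integral>\<^sup>+a. \<integral>\<^sup>+b. h (a, b) \<partial>lborel \<partial>lborel)"
  by (rule lborel.nn_integral_fst[symmetric]) measurable

lemma It3:
  assumes [measurable]: "h \<in> borel_measurable B3"
  shows "(\<integral>\<^sup>+x. h x \<partial>M3) = (\<integral>\<^sup>+a. \<integral>\<^sup>+b. \<integral>\<^sup>+c. h (a, b, c) \<partial>lborel \<partial>lborel \<partial>lborel)"
proof -
  have "(\<integral>\<^sup>+x. h x \<partial>M3) = (\<integral>\<^sup>+a. \<integral>\<^sup>+y. h (a, y) \<partial>M2 \<partial>lborel)"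
    by (rule sigma_finite_measure.nn_integral_fst[OF sf_M2, symmetric]) measurable
  also have "\<dots> = (\<integral>\<^sup>+a. \<integral>\<^sup>+b. \<integral>\<^sup>+c. h (a, b, c) \<partial>lborel \<partial>lborel \<partial>lborel)"
    by (rule nn_integral_cong, rule It2) measurable
  finally show ?thesis .
qed

lemma Reorder:
  assumes [measurable]: "h \<in> borel_measurable B3"
  shows "(\<integral>\<^sup>+x. h x \<partial>M3) = (\<integral>\<^sup>+c. \<integral>\<^sup>+y. h (fst y, snd y, c) \<partial>M2 \<partial>lborel)"
proof -
  have "(\<integral>\<^sup>+x. h x \<partial>M3) = (\<integral>\<^sup>+a. \<integral>\<^sup>+b. \<integral>\<^sup>+c. h (a, b, c) \<partial>lborel \<partial>lborel \<partial>lborel)"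
    by (rule It3) measurable
  also have "\<dots> = (\<integral>\<^sup>+a. \<integral>\<^sup>+c. \<integral>\<^sup>+b. h (a, b, c) \<partial>lborel \<partial>lborel \<partial>lborel)"
    by (rule nn_integral_cong, rule nn_swap') measurable
  also have "\<dots> = (\<integral>\<^sup>+c. \<integral>\<^sup>+a. \<integral>\<^sup>+b. h (a, b, c) \<partial>lborel \<partial>lborel \<partial>lborel)"
    by (rule nn_swap') measurable
  also have "\<dots> = (\<integral>\<^sup>+c. \<integral>\<^sup>+y. h (fst y, snd y, c) \<partial>M2 \<partial>lborel)"
    by (rule nn_integral_cong, subst It2) simp_all
  finally show ?thesis .
qed

lemma sw_inv:
  assumes [measurable]: "h \<in> borel_measurable B3"
  shows "(\<integral>\<^sup>+x. h (fst x, snd (snd x), fst (snd x)) \<partial>M3) = (\<integral>\<^sup>+x. h x \<partial>M3)"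
proof -
  have m: "(\<lambda>x. h (fst x, snd (snd x), fst (snd x))) \<in> borel_measurable B3" by measurable
  have "(\<integral>\<^sup>+x. h (fst x, snd (snd x), fst (snd x)) \<partial>M3) = (\<integral>\<^sup>+a. \<integral>\<^sup>+b. \<integral>\<^sup>+c. h (a, c, b) \<partial>lborel \<partial>lborel \<partial>lborel)"
    by (subst It3[OF m]) simp
  also have "\<dots> = (\<integral>\<^sup>+a. \<integral>\<^sup>+c. \<integral>\<^sup>+b. h (a, c, b) \<partial>lborel \<partial>lborel \<partial>lborel)"
    by (rule nn_integral_cong, rule nn_swap') measurable
  also have "\<dots> = (\<integral>\<^sup>+x. h x \<partial>M3)"
    by (subst It3[OF assms]) simp
  finally show ?thesis .
qed

definition dif :: "freq \<Rightarrow> freq \<Rightarrow> freq" where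
  "dif p q = (fst p - fst q, fst (snd p) - fst (snd q), snd (snd p) - snd (snd q))"

lemma dif_minus: "dif p q = p - q"
  by (cases p; cases q) (simp add: dif_def)

lemma dif_meas[measurable (raw)]:
  assumes [measurable]: "f \<in> N \<rightarrow>\<^sub>M B3" "g \<in> N \<rightarrow>\<^sub>M B3"
  shows "(\<lambda>x. dif (f x) (g x)) \<in> N \<rightarrow>\<^sub>M B3"
  unfolding dif_def by measurable

lemma meas3: "h \<in> borel_measurable (borel :: freq measure) \<longleftrightarrow> h \<in> borel_measurable B3"
  by (simp add: borel_prod)
lemma meas2: "h \<in> borel_measurable (borel :: (real \<times> real) measure) \<longleftrightarrow> h \<in> borel_measurable B2"
  by (simp add: borel_prod)

lemma trans3:
  assumes [measurable]: "h \<in> borel_measurable B3"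
  shows "(\<integral>\<^sup>+p. h (dif p q) \<partial>M3) = (\<integral>\<^sup>+x. h x \<partial>M3)"
proof -
  have hb: "h \<in> borel_measurable borel" using meas3 assms by blast
  show ?thesis
    using nn_trans'[OF hb, of q] by (simp add: dif_minus lborel3)
qed

lemma refl3:
  assumes [measurable]: "h \<in> borel_measurable B3"
  shows "(\<integral>\<^sup>+q. h (dif p q) \<partial>M3) = (\<integral>\<^sup>+x. h x \<partial>M3)"
proof -
  have hb: "h \<in> borel_measurable borel" using meas3 assms by blast
  show ?thesis
    using nn_refl[OF hb, of p] by (simp add: dif_minus lborel3)
qed

lemma trans2:
  assumes [measurable]: "h \<in> borel_measurable B2"
  shows "(\<integral>\<^sup>+p. h (fst p - fst q, snd p - snd q) \<partial>M2) = (\<integral>\<^sup>+x. h x \<partial>M2)"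
proof -
  have hb: "h \<in> borel_measurable borel" using meas2 assms by blast
  have "(\<lambda>p. h (fst p - fst q, snd p - snd q)) = (\<lambda>p. h (p - q))" by (auto simp: minus_prod_def)
  then show ?thesis
    using nn_trans'[OF hb, of q] by (simp add: lborel2)
qed

definition esqrt :: "ennreal \<Rightarrow> ennreal" where
  "esqrt x = (if x = \<infinity> then \<infinity> else ennreal (sqrt (enn2real x)))"

lemma esqrt_meas[measurable]: "esqrt \<in> borel_measurable borel"
  unfolding esqrt_def[abs_def] by measurable

lemma esqrt_sq: "esqrt x * esqrt x = x"
proof (cases "x = \<infinity>")
  case False
  then obtain r where r: "x = ennreal r" "r \<ge> 0" by (cases x) auto
  then show ?thesis by (simp add: esqrt_def ennreal_mult'[symmetric])
qed (simp add: esqrt_def)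

lemma esqrt_ennreal: "r \<ge> 0 \<Longrightarrow> esqrt (ennreal r) = ennreal (sqrt r)"
  by (simp add: esqrt_def)

lemma esqrt_zero[simp]: "esqrt 0 = 0" by (simp add: esqrt_def)

lemma esqrt_mono: "x \<le> y \<Longrightarrow> esqrt x \<le> esqrt y"
proof (cases "y = \<infinity>")
  case True then show ?thesis by (simp add: esqrt_def)
next
  case False
  assume xy: "x \<le> y"
  then have "x \<noteq> \<infinity>" using False by (auto simp: top_unique)
  with False xy show ?thesis
    by (cases x; cases y) (auto simp: esqrt_def)
qed

lemma ennreal_sq_le_imp_le:
  fixes a b :: ennreal
  assumes ab: "a * a \<le> b * b" shows "a \<le> b"
proof (cases b)
  case (real y)
  show ?thesis
  proof (cases a)
    case (real x)
    with \<open>b = ennreal y\<close> ab have "ennreal (x * x) \<le> ennreal (y * y)"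
      using \<open>0 \<le> y\<close> by (simp add: ennreal_mult'[symmetric])
    then have "x * x \<le> y * y" using \<open>0 \<le> y\<close> ennreal_le_iff mult_nonneg_nonneg by metis
    then have "x \<le> y" using real \<open>0 \<le> y\<close> by (metis abs_le_square_iff abs_of_nonneg power2_eq_square)
    then show ?thesis using real \<open>b = ennreal y\<close> by simp
  next
    case top
    then show ?thesis using ab \<open>b = ennreal y\<close> \<open>0 \<le> y\<close> by (simp add: ennreal_mult'[symmetric] top_unique)
  qed
qed simp
lemma le_esqrt: "a * a \<le> x \<Longrightarrow> a \<le> esqrt x"
  by (rule ennreal_sq_le_imp_le) (simp add: esqrt_sq)

lemma four_ac: "((a::ennreal) * b) * (a * b) = (a * a) * (b * b)" by (simp only: ac_simps)

lemma esqrt_mult: "esqrt (x * y) = esqrt x * esqrt y"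
proof (rule antisym)
  show "esqrt x * esqrt y \<le> esqrt (x * y)"
    by (rule le_esqrt) (simp only: four_ac esqrt_sq order_refl)
  show "esqrt (x * y) \<le> esqrt x * esqrt y"
    by (rule ennreal_sq_le_imp_le) (simp only: four_ac esqrt_sq order_refl)
qed

lemma CS_sqrt:
  assumes [measurable]: "f \<in> borel_measurable M" "g \<in> borel_measurable M"
  shows "(\<integral>\<^sup>+x. f x * g x \<partial>M) \<le> esqrt (\<integral>\<^sup>+x. f x ^ 2 \<partial>M) * esqrt (\<integral>\<^sup>+x. g x ^ 2 \<partial>M)"
proof (rule ennreal_sq_le_imp_le)
  have "(\<integral>\<^sup>+x. f x * g x \<partial>M) * (\<integral>\<^sup>+x. f x * g x \<partial>M) \<le> (\<integral>\<^sup>+x. f x ^ 2 \<partial>M) * (\<integral>\<^sup>+x. g x ^ 2 \<partial>M)"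
    using Cauchy_Schwarz_nn_integral[of f M g] by (simp add: power2_eq_square)
  also have "\<dots> = (esqrt (\<integral>\<^sup>+x. f x ^ 2 \<partial>M) * esqrt (\<integral>\<^sup>+x. g x ^ 2 \<partial>M)) * (esqrt (\<integral>\<^sup>+x. f x ^ 2 \<partial>M) * esqrt (\<integral>\<^sup>+x. g x ^ 2 \<partial>M))"
    by (simp only: four_ac esqrt_sq)
  finally show "(\<integral>\<^sup>+x. f x * g x \<partial>M) * (\<integral>\<^sup>+x. f x * g x \<partial>M) \<le> \<dots>" .
qed

lemma sq_integral:
  assumes [measurable]: "f \<in> borel_measurable M"
  shows "(\<integral>\<^sup>+x. f x \<partial>M)^2 = (\<integral>\<^sup>+x. \<integral>\<^sup>+y. f x * f y \<partial>M \<partial>M)"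
proof -
  have "(\<integral>\<^sup>+x. \<integral>\<^sup>+y. f x * f y \<partial>M \<partial>M) = (\<integral>\<^sup>+x. f x * (\<integral>\<^sup>+y. f y \<partial>M) \<partial>M)"
    by (rule nn_integral_cong) (rule nn_integral_cmult, simp)
  also have "\<dots> = (\<integral>\<^sup>+x. f x \<partial>M) * (\<integral>\<^sup>+y. f y \<partial>M)"
    by (rule nn_integral_multc) simp
  finally show ?thesis by (simp add: power2_eq_square)
qed

lemma sum3_sq: "((a::ennreal) + b + c)^2 \<le> 3 * (a^2 + b^2 + c^2)"
proof (cases "a = \<infinity> \<or> b = \<infinity> \<or> c = \<infinity>")
  case True
  then have "a^2 + b^2 + c^2 = \<infinity>" by (auto simp: power2_eq_square)
  then have h: "3 * (a^2 + b^2 + c^2) = \<infinity>" by (simp add: ennreal_mult_eq_top_iff)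
  show ?thesis unfolding h by simp
next
  case False
  obtain x where x: "a = ennreal x" "x \<ge> 0" using False by (cases a) auto
  obtain y where y: "b = ennreal y" "y \<ge> 0" using False by (cases b) auto
  obtain z where z: "c = ennreal z" "z \<ge> 0" using False by (cases c) auto
  have "(x + y + z)^2 \<le> 3 * (x^2 + y^2 + z^2)"
    using sum_squares_ge_zero[of "x-y" "y-z"] zero_le_square[of "x - z"] by (simp add: power2_eq_square algebra_simps)
  then have *: "ennreal ((x + y + z)^2) \<le> ennreal (3 * (x^2 + y^2 + z^2))" by (rule ennreal_leI)
  have l0: "a + b + c = ennreal (x + y + z)" using x y z by simp
  have l: "(a + b + c)^2 = ennreal ((x + y + z)^2)"
    unfolding l0 by (rule ennreal_power) (use x y z in simp)
  have e1: "a^2 = ennreal (x^2)" using x by (simp add: ennreal_power)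
  have e2: "b^2 = ennreal (y^2)" using y by (simp add: ennreal_power)
  have e3: "c^2 = ennreal (z^2)" using z by (simp add: ennreal_power)
  have r0: "a^2 + b^2 + c^2 = ennreal (x^2 + y^2 + z^2)" unfolding e1 e2 e3 by simp
  have r: "3 * (a^2 + b^2 + c^2) = ennreal (3 * (x^2 + y^2 + z^2))"
    unfolding r0 by (simp add: ennreal_mult)
  show ?thesis unfolding l r by (rule *)
qed

definition sig :: "freq \<Rightarrow> real" where
  "sig q = fst q - (fst (snd q))^3 - (snd (snd q))^3"

lemma sig_meas[measurable]: "sig \<in> borel_measurable B3"
  unfolding sig_def[abs_def] by measurable

definition kk :: "real \<Rightarrow> freq \<Rightarrow> freq \<Rightarrow> ennreal" where
  "kk b p q = ennreal (\<bar>fst (snd p)\<bar> * \<bar>2 * fst (snd q) - fst (snd p)\<bar>) * Jr (2*b) (sig q) * Jr (2*b) (sig (dif p q))"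

definition kp :: "real \<Rightarrow> freq \<Rightarrow> freq \<Rightarrow> ennreal" where
  "kp b p q = ennreal (sqrt \<bar>fst (snd p)\<bar> * sqrt \<bar>2 * fst (snd q) - fst (snd p)\<bar>) * Jr b (sig q) * Jr b (sig (dif p q))"

lemma kk_meas[measurable]: "(\<lambda>x. kk b (fst x) (snd x)) \<in> borel_measurable (B3 \<Otimes>\<^sub>M B3)"
  unfolding kk_def by measurable

lemma kp_meas[measurable]: "(\<lambda>x. kp b (fst x) (snd x)) \<in> borel_measurable (B3 \<Otimes>\<^sub>M B3)"
  unfolding kp_def by measurable

lemma kk_meas1[measurable]: "kk b p \<in> borel_measurable B3"
  unfolding kk_def apply measurable by (auto simp: space_pair_measure)

lemma kp_meas1[measurable]: "kp b p \<in> borel_measurable B3"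
  unfolding kp_def apply measurable by (auto simp: space_pair_measure)

lemma Jr_sq: "(Jr b v)^2 = Jr (2*b) v"
proof -
  have "japan v powr (-b) * japan v powr (-b) = japan v powr (-(2*b))"
    using japan_pos[of v] by (simp add: powr_add[symmetric])
  then show ?thesis unfolding Jr_def
    by (simp add: power2_eq_square ennreal_mult'[symmetric])
qed

lemma Jr_mult: "Jr a v * Jr b v = Jr (a + b) v"
proof -
  have "japan v powr (-a) * japan v powr (-b) = japan v powr (-(a+b))"
    using japan_pos[of v] by (simp add: powr_add[symmetric])
  then show ?thesis unfolding Jr_def
    by (simp add: ennreal_mult'[symmetric])
qed

lemma kp_sq: "(kp b p q)^2 = kk b p q"
proof -
  have "(ennreal (sqrt \<bar>fst (snd p)\<bar> * sqrt \<bar>2 * fst (snd q) - fst (snd p)\<bar>))^2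
      = ennreal (\<bar>fst (snd p)\<bar> * \<bar>2 * fst (snd q) - fst (snd p)\<bar>)"
    by (simp add: ennreal_power power_mult_distrib)
  then show ?thesis unfolding kp_def kk_def
    by (simp add: power_mult_distrib Jr_sq)
qed

lemma kk_bound:
  "(\<integral>\<^sup>+x. kk b p (fst x, snd x, c) \<partial>M2) \<le> ennreal (2/3) * IJ (2*b) * IJ (2*b)"
proof -
  obtain \<tau> \<xi> \<eta> where p: "p = (\<tau>, \<xi>, \<eta>)" by (cases p) auto
  have "(\<integral>\<^sup>+x. kk b p (fst x, snd x, c) \<partial>M2) =
    (\<integral>\<^sup>+x. ennreal (\<bar>\<xi>\<bar> * \<bar>2 * snd x - \<xi>\<bar>) * Jr (2*b) (fst x - snd x^3 - c^3) * Jr (2*b) (\<tau> - fst x - (\<xi> - snd x)^3 - (\<eta> - c)^3) \<partial>lborel)"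
    by (simp add: lborel2 kk_def sig_def dif_def p)
  also have "\<dots> \<le> ennreal (2/3) * IJ (2*b) * IJ (2*b)"
    by (rule core_2d)
  finally show ?thesis .
qed

lemma kk_weight_bound:
  "(\<integral>\<^sup>+q. kk b p q * Jr r (snd (snd q)) \<partial>M3) \<le> ennreal (2/3) * IJ (2*b) * IJ (2*b) * IJ r"
proof -
  have m: "(\<lambda>q. kk b p q * Jr r (snd (snd q))) \<in> borel_measurable B3" by measurable
  have "(\<integral>\<^sup>+q. kk b p q * Jr r (snd (snd q)) \<partial>M3)
      = (\<integral>\<^sup>+c. \<integral>\<^sup>+y. kk b p (fst y, snd y, c) * Jr r c \<partial>M2 \<partial>lborel)"
    by (subst Reorder[OF m]) simp
  also have "\<dots> = (\<integral>\<^sup>+c. Jr r c * \<integral>\<^sup>+y. kk b p (fst y, snd y, c) \<partial>M2 \<partial>lborel)"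
  proof (rule nn_integral_cong)
    fix c
    have "(\<integral>\<^sup>+y. kk b p (fst y, snd y, c) * Jr r c \<partial>M2) = (\<integral>\<^sup>+y. Jr r c * kk b p (fst y, snd y, c) \<partial>M2)"
      by (simp add: mult.commute)
    also have "\<dots> = Jr r c * \<integral>\<^sup>+y. kk b p (fst y, snd y, c) \<partial>M2"
      by (rule nn_integral_cmult) measurable
    finally show "(\<integral>\<^sup>+y. kk b p (fst y, snd y, c) * Jr r c \<partial>M2) = Jr r c * \<integral>\<^sup>+y. kk b p (fst y, snd y, c) \<partial>M2" .
  qed
  also have "\<dots> \<le> (\<integral>\<^sup>+c. Jr r c * (ennreal (2/3) * IJ (2*b) * IJ (2*b)) \<partial>lborel)"
    by (intro nn_integral_mono mult_left_mono kk_bound) auto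
  also have "\<dots> = ennreal (2/3) * IJ (2*b) * IJ (2*b) * IJ r"
    by (subst nn_integral_multc) (auto simp: IJ_def mult_ac)
  finally show ?thesis .
qed

lemma M3_nn_meas[measurable (raw)]:
  "case_prod f \<in> borel_measurable (N \<Otimes>\<^sub>M M3) \<Longrightarrow> (\<lambda>x. \<integral>\<^sup>+y. f x y \<partial>M3) \<in> borel_measurable N"
  by (rule sigma_finite_measure.borel_measurable_nn_integral[OF sf_M3])

lemma M2_nn_meas[measurable (raw)]:
  "case_prod f \<in> borel_measurable (N \<Otimes>\<^sub>M M2) \<Longrightarrow> (\<lambda>x. \<integral>\<^sup>+y. f x y \<partial>M2) \<in> borel_measurable N"
  by (rule sigma_finite_measure.borel_measurable_nn_integral[OF sf_M2])

lemma space_B3[simp]: "space B3 = UNIV" by (simp add: space_pair_measure)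
lemma space_B2[simp]: "space B2 = UNIV" by (simp add: space_pair_measure)
lemma id_M3B3[measurable]: "(\<lambda>x. x) \<in> M3 \<rightarrow>\<^sub>M B3"
  by (rule measurable_ident_sets) (intro sets_pair_measure_cong; simp)
lemma id_M2B2[measurable]: "(\<lambda>x. x) \<in> M2 \<rightarrow>\<^sub>M B2"
  by (rule measurable_ident_sets) (intro sets_pair_measure_cong; simp)

lemma CSL:
  fixes k :: "freq \<Rightarrow> freq \<Rightarrow> ennreal" and F G :: "freq \<Rightarrow> ennreal"
  assumes km[measurable]: "(\<lambda>x. k (fst x) (snd x)) \<in> borel_measurable (B3 \<Otimes>\<^sub>M B3)"
    and k1[measurable]: "\<And>p. k p \<in> borel_measurable B3"
    and F[measurable]: "F \<in> borel_measurable B3" and G[measurable]: "G \<in> borel_measurable B3"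
    and K: "\<And>p. (\<integral>\<^sup>+q. (k p q)^2 \<partial>M3) \<le> K"
  shows "(\<integral>\<^sup>+p. (\<integral>\<^sup>+q. k p q * F q * G (dif p q) \<partial>M3)^2 \<partial>M3)
     \<le> K * (\<integral>\<^sup>+q. (F q)^2 \<partial>M3) * (\<integral>\<^sup>+q. (G q)^2 \<partial>M3)"
proof -
  have pt: "(\<integral>\<^sup>+q. k p q * F q * G (dif p q) \<partial>M3)^2 \<le> K * (\<integral>\<^sup>+q. (F q)^2 * (G (dif p q))^2 \<partial>M3)" for p
  proof -
    have "(\<integral>\<^sup>+q. k p q * F q * G (dif p q) \<partial>M3)^2 = (\<integral>\<^sup>+q. k p q * (F q * G (dif p q)) \<partial>M3)^2"
      by (simp add: mult.assoc)
    also have "\<dots> \<le> (\<integral>\<^sup>+q. (k p q)^2 \<partial>M3) * (\<integral>\<^sup>+q. (F q * G (dif p q))^2 \<partial>M3)"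
      by (rule Cauchy_Schwarz_nn_integral) measurable
    also have "(\<integral>\<^sup>+q. (F q * G (dif p q))^2 \<partial>M3) = (\<integral>\<^sup>+q. (F q)^2 * (G (dif p q))^2 \<partial>M3)"
      by (simp only: power_mult_distrib)
    also have "(\<integral>\<^sup>+q. (k p q)^2 \<partial>M3) * (\<integral>\<^sup>+q. (F q)^2 * (G (dif p q))^2 \<partial>M3) \<le> K * (\<integral>\<^sup>+q. (F q)^2 * (G (dif p q))^2 \<partial>M3)"
      by (rule mult_right_mono[OF K]) simp
    finally show ?thesis .
  qed
  have "(\<integral>\<^sup>+p. (\<integral>\<^sup>+q. k p q * F q * G (dif p q) \<partial>M3)^2 \<partial>M3)
      \<le> (\<integral>\<^sup>+p. K * (\<integral>\<^sup>+q. (F q)^2 * (G (dif p q))^2 \<partial>M3) \<partial>M3)"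
    by (rule nn_integral_mono) (rule pt)
  also have "\<dots> = K * (\<integral>\<^sup>+p. \<integral>\<^sup>+q. (F q)^2 * (G (dif p q))^2 \<partial>M3 \<partial>M3)"
    by (rule nn_integral_cmult) measurable
  also have "(\<integral>\<^sup>+p. \<integral>\<^sup>+q. (F q)^2 * (G (dif p q))^2 \<partial>M3 \<partial>M3) = (\<integral>\<^sup>+q. \<integral>\<^sup>+p. (F q)^2 * (G (dif p q))^2 \<partial>M3 \<partial>M3)"
    by (rule pair_sigma_finite.Fubini'[OF psf_M3M3]) measurable
  also have "\<dots> = (\<integral>\<^sup>+q. (F q)^2 * \<integral>\<^sup>+p. (G (dif p q))^2 \<partial>M3 \<partial>M3)"
  proof (rule nn_integral_cong)
    fix q
    show "(\<integral>\<^sup>+p. (F q)^2 * (G (dif p q))^2 \<partial>M3) = (F q)^2 * \<integral>\<^sup>+p. (G (dif p q))^2 \<partial>M3"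
      by (rule nn_integral_cmult) measurable
  qed
  also have "\<dots> = (\<integral>\<^sup>+q. (F q)^2 * \<integral>\<^sup>+p. (G p)^2 \<partial>M3 \<partial>M3)"
  proof (rule nn_integral_cong)
    fix q
    have m: "(\<lambda>x. (G x)^2) \<in> borel_measurable B3" by measurable
    show "(F q)^2 * (\<integral>\<^sup>+p. (G (dif p q))^2 \<partial>M3) = (F q)^2 * \<integral>\<^sup>+p. (G p)^2 \<partial>M3"
      using trans3[OF m, of q] by simp
  qed
  also have "\<dots> = (\<integral>\<^sup>+q. (F q)^2 \<partial>M3) * (\<integral>\<^sup>+q. (G q)^2 \<partial>M3)"
    by (rule nn_integral_multc) measurable
  finally show ?thesis by (simp only: mult.assoc)
qed

lemma kp_meas'[measurable]: "case_prod (kp b) \<in> borel_measurable (B3 \<Otimes>\<^sub>M B3)"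
  using kp_meas[of b] by (simp add: case_prod_beta')

lemma kk_le: "(\<integral>\<^sup>+x. (kp b p (fst x, snd x, c))^2 \<partial>M2) \<le> ennreal (2/3) * IJ (2*b) * IJ (2*b)"
  using kk_bound[of b p c] by (simp add: kp_sq)

lemma J0:
  fixes F G :: "freq \<Rightarrow> ennreal"
  assumes F[measurable]: "F \<in> borel_measurable B3" and G[measurable]: "G \<in> borel_measurable B3"
  shows "(\<integral>\<^sup>+p. (Jr s (snd (snd p)) * \<integral>\<^sup>+q. kp b p q * F q * G (dif p q) \<partial>M3)^2 \<partial>M3)
    \<le> ennreal (2/3) * IJ (2*b) * IJ (2*b) * IJ (2 * s) * (\<integral>\<^sup>+q. (F q)^2 \<partial>M3) * (\<integral>\<^sup>+q. (G q)^2 \<partial>M3)"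
proof -
  define Kc where "Kc = ennreal (2/3) * IJ (2*b) * IJ (2*b)"
  define Y where "Y p c = (\<integral>\<^sup>+x. kp b p (fst x, snd x, c) * F (fst x, snd x, c) * G (dif p (fst x, snd x, c)) \<partial>M2)" for p c
  have mY[measurable]: "case_prod Y \<in> borel_measurable (B3 \<Otimes>\<^sub>M borel)"
    unfolding Y_def[abs_def] by measurable
  define A where "A c = (\<integral>\<^sup>+x. (F (fst x, snd x, c))^2 \<partial>M2)" for c
  define B where "B c = (\<integral>\<^sup>+x. (G (fst x, snd x, c))^2 \<partial>M2)" for c
  have mA[measurable]: "A \<in> borel_measurable borel" unfolding A_def[abs_def] by measurable
  have mB[measurable]: "B \<in> borel_measurable borel" unfolding B_def[abs_def] by measurable
  have mF2: "(\<lambda>q. (F q)^2) \<in> borel_measurable B3" by measurable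
  have mG2: "(\<lambda>q. (G q)^2) \<in> borel_measurable B3" by measurable
  have FA: "(\<integral>\<^sup>+q. (F q)^2 \<partial>M3) = (\<integral>\<^sup>+c. A c \<partial>lborel)"
    unfolding A_def by (subst Reorder[OF mF2]) simp
  have GB: "(\<integral>\<^sup>+q. (G q)^2 \<partial>M3) = (\<integral>\<^sup>+c. B c \<partial>lborel)"
    unfolding B_def by (subst Reorder[OF mG2]) simp
  have S1: "(\<integral>\<^sup>+q. kp b p q * F q * G (dif p q) \<partial>M3) = (\<integral>\<^sup>+c. Y p c \<partial>lborel)" for p
  proof -
    have m: "(\<lambda>q. kp b p q * F q * G (dif p q)) \<in> borel_measurable B3" by measurable
    show ?thesis unfolding Y_def by (subst Reorder[OF m]) simp
  qed
  have S6pt: "(Y p c)^2 \<le> Kc * (\<integral>\<^sup>+x. (F (fst x, snd x, c))^2 * (G (dif p (fst x, snd x, c)))^2 \<partial>M2)" for p c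
  proof -
    have "(Y p c)^2 = (\<integral>\<^sup>+x. kp b p (fst x, snd x, c) * (F (fst x, snd x, c) * G (dif p (fst x, snd x, c))) \<partial>M2)^2"
      unfolding Y_def by (simp only: mult.assoc)
    also have "\<dots> \<le> (\<integral>\<^sup>+x. (kp b p (fst x, snd x, c))^2 \<partial>M2) * (\<integral>\<^sup>+x. (F (fst x, snd x, c) * G (dif p (fst x, snd x, c)))^2 \<partial>M2)"
      by (rule Cauchy_Schwarz_nn_integral) measurable
    also have "(\<integral>\<^sup>+x. (F (fst x, snd x, c) * G (dif p (fst x, snd x, c)))^2 \<partial>M2) = (\<integral>\<^sup>+x. (F (fst x, snd x, c))^2 * (G (dif p (fst x, snd x, c)))^2 \<partial>M2)"
      by (simp only: power_mult_distrib)
    also have "(\<integral>\<^sup>+x. (kp b p (fst x, snd x, c))^2 \<partial>M2) * (\<integral>\<^sup>+x. (F (fst x, snd x, c))^2 * (G (dif p (fst x, snd x, c)))^2 \<partial>M2)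
        \<le> Kc * (\<integral>\<^sup>+x. (F (fst x, snd x, c))^2 * (G (dif p (fst x, snd x, c)))^2 \<partial>M2)"
      by (rule mult_right_mono) (simp_all only: Kc_def kk_le zero_le)
    finally show ?thesis .
  qed
  have S6: "(\<integral>\<^sup>+y. (Y (fst y, snd y, \<eta>) c)^2 \<partial>M2) \<le> Kc * (A c * B (\<eta> - c))" for \<eta> c
  proof -
    have "(\<integral>\<^sup>+y. (Y (fst y, snd y, \<eta>) c)^2 \<partial>M2)
        \<le> (\<integral>\<^sup>+y. Kc * (\<integral>\<^sup>+x. (F (fst x, snd x, c))^2 * (G (dif (fst y, snd y, \<eta>) (fst x, snd x, c)))^2 \<partial>M2) \<partial>M2)"
      by (rule nn_integral_mono) (rule S6pt)
    also have "\<dots> = Kc * (\<integral>\<^sup>+y. \<integral>\<^sup>+x. (F (fst x, snd x, c))^2 * (G (dif (fst y, snd y, \<eta>) (fst x, snd x, c)))^2 \<partial>M2 \<partial>M2)"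
      by (rule nn_integral_cmult) measurable
    also have "(\<integral>\<^sup>+y. \<integral>\<^sup>+x. (F (fst x, snd x, c))^2 * (G (dif (fst y, snd y, \<eta>) (fst x, snd x, c)))^2 \<partial>M2 \<partial>M2)
        = (\<integral>\<^sup>+x. \<integral>\<^sup>+y. (F (fst x, snd x, c))^2 * (G (dif (fst y, snd y, \<eta>) (fst x, snd x, c)))^2 \<partial>M2 \<partial>M2)"
      by (rule pair_sigma_finite.Fubini'[OF psf_M2M2]) measurable
    also have "\<dots> = (\<integral>\<^sup>+x. (F (fst x, snd x, c))^2 * B (\<eta> - c) \<partial>M2)"
    proof (rule nn_integral_cong)
      fix x :: "real \<times> real"
      have m: "(\<lambda>z. (G (fst z, snd z, \<eta> - c))^2) \<in> borel_measurable B2" by measurable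
      have "(\<integral>\<^sup>+y. (F (fst x, snd x, c))^2 * (G (dif (fst y, snd y, \<eta>) (fst x, snd x, c)))^2 \<partial>M2)
          = (F (fst x, snd x, c))^2 * (\<integral>\<^sup>+y. (G (fst y - fst x, snd y - snd x, \<eta> - c))^2 \<partial>M2)"
        by (subst nn_integral_cmult[symmetric]) (measurable, simp add: dif_def)
      also have "(\<integral>\<^sup>+y. (G (fst y - fst x, snd y - snd x, \<eta> - c))^2 \<partial>M2) = B (\<eta> - c)"
        using trans2[OF m, of x] by (simp add: B_def)
      finally show "(\<integral>\<^sup>+y. (F (fst x, snd x, c))^2 * (G (dif (fst y, snd y, \<eta>) (fst x, snd x, c)))^2 \<partial>M2)
          = (F (fst x, snd x, c))^2 * B (\<eta> - c)" .
    qed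
    also have "\<dots> = A c * B (\<eta> - c)"
      unfolding A_def by (rule nn_integral_multc) measurable
    finally show ?thesis .
  qed
  have S7: "(\<integral>\<^sup>+y. Y (fst y, snd y, \<eta>) c * Y (fst y, snd y, \<eta>) c' \<partial>M2)
      \<le> Kc * ((esqrt (A c) * esqrt (B (\<eta> - c))) * (esqrt (A c') * esqrt (B (\<eta> - c'))))" for \<eta> c c'
  proof -
    have "(\<integral>\<^sup>+y. Y (fst y, snd y, \<eta>) c * Y (fst y, snd y, \<eta>) c' \<partial>M2)
        \<le> esqrt (\<integral>\<^sup>+y. (Y (fst y, snd y, \<eta>) c)^2 \<partial>M2) * esqrt (\<integral>\<^sup>+y. (Y (fst y, snd y, \<eta>) c')^2 \<partial>M2)"
      by (rule CS_sqrt) measurable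
    also have "\<dots> \<le> esqrt (Kc * (A c * B (\<eta> - c))) * esqrt (Kc * (A c' * B (\<eta> - c')))"
      by (intro mult_mono esqrt_mono S6) auto
    also have "\<dots> = (esqrt Kc * esqrt Kc) * ((esqrt (A c) * esqrt (B (\<eta> - c))) * (esqrt (A c') * esqrt (B (\<eta> - c'))))"
      by (simp only: esqrt_mult ac_simps)
    also have "\<dots> = Kc * ((esqrt (A c) * esqrt (B (\<eta> - c))) * (esqrt (A c') * esqrt (B (\<eta> - c'))))"
      by (simp only: esqrt_sq)
    finally show ?thesis .
  qed
  have esq2: "(esqrt x)^2 = x" for x by (simp add: power2_eq_square esqrt_sq)
  have S9: "(\<integral>\<^sup>+c. esqrt (A c) * esqrt (B (\<eta> - c)) \<partial>lborel)^2 \<le> (\<integral>\<^sup>+c. A c \<partial>lborel) * (\<integral>\<^sup>+c. B c \<partial>lborel)" for \<eta>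
  proof -
    have "(\<integral>\<^sup>+c. esqrt (A c) * esqrt (B (\<eta> - c)) \<partial>lborel)^2
        \<le> (\<integral>\<^sup>+c. (esqrt (A c))^2 \<partial>lborel) * (\<integral>\<^sup>+c. (esqrt (B (\<eta> - c)))^2 \<partial>lborel)"
      by (rule Cauchy_Schwarz_nn_integral) measurable
    also have "(\<integral>\<^sup>+c. (esqrt (B (\<eta> - c)))^2 \<partial>lborel) = (\<integral>\<^sup>+c. B c \<partial>lborel)"
      unfolding esq2 by (rule nn_refl) measurable
    finally show ?thesis by (simp only: esq2)
  qed
  have "(\<integral>\<^sup>+p. (Jr s (snd (snd p)) * \<integral>\<^sup>+q. kp b p q * F q * G (dif p q) \<partial>M3)^2 \<partial>M3)
      = (\<integral>\<^sup>+p. Jr (2 * s) (snd (snd p)) * (\<integral>\<^sup>+c. \<integral>\<^sup>+c'. Y p c * Y p c' \<partial>lborel \<partial>lborel) \<partial>M3)"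
  proof (rule nn_integral_cong)
    fix p :: freq
    have "(\<integral>\<^sup>+c. Y p c \<partial>lborel)^2 = (\<integral>\<^sup>+c. \<integral>\<^sup>+c'. Y p c * Y p c' \<partial>lborel \<partial>lborel)"
      by (rule sq_integral) measurable
    then show "(Jr s (snd (snd p)) * \<integral>\<^sup>+q. kp b p q * F q * G (dif p q) \<partial>M3)^2
        = Jr (2 * s) (snd (snd p)) * (\<integral>\<^sup>+c. \<integral>\<^sup>+c'. Y p c * Y p c' \<partial>lborel \<partial>lborel)"
      by (simp only: power_mult_distrib Jr_sq S1)
  qed
  also have "\<dots> = (\<integral>\<^sup>+\<eta>. \<integral>\<^sup>+y. Jr (2 * s) \<eta> * (\<integral>\<^sup>+c. \<integral>\<^sup>+c'. Y (fst y, snd y, \<eta>) c * Y (fst y, snd y, \<eta>) c' \<partial>lborel \<partial>lborel) \<partial>M2 \<partial>lborel)"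
  proof -
    have m: "(\<lambda>p. Jr (2 * s) (snd (snd p)) * (\<integral>\<^sup>+c. \<integral>\<^sup>+c'. Y p c * Y p c' \<partial>lborel \<partial>lborel)) \<in> borel_measurable B3"
      by measurable
    show ?thesis by (subst Reorder[OF m]) simp
  qed
  also have "\<dots> = (\<integral>\<^sup>+\<eta>. Jr (2 * s) \<eta> * (\<integral>\<^sup>+c. \<integral>\<^sup>+c'. \<integral>\<^sup>+y. Y (fst y, snd y, \<eta>) c * Y (fst y, snd y, \<eta>) c' \<partial>M2 \<partial>lborel \<partial>lborel) \<partial>lborel)"
  proof (rule nn_integral_cong)
    fix \<eta> :: real
    have "(\<integral>\<^sup>+y. Jr (2 * s) \<eta> * (\<integral>\<^sup>+c. \<integral>\<^sup>+c'. Y (fst y, snd y, \<eta>) c * Y (fst y, snd y, \<eta>) c' \<partial>lborel \<partial>lborel) \<partial>M2)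
        = Jr (2 * s) \<eta> * (\<integral>\<^sup>+y. \<integral>\<^sup>+c. \<integral>\<^sup>+c'. Y (fst y, snd y, \<eta>) c * Y (fst y, snd y, \<eta>) c' \<partial>lborel \<partial>lborel \<partial>M2)"
      by (rule nn_integral_cmult) measurable
    also have "(\<integral>\<^sup>+y. \<integral>\<^sup>+c. \<integral>\<^sup>+c'. Y (fst y, snd y, \<eta>) c * Y (fst y, snd y, \<eta>) c' \<partial>lborel \<partial>lborel \<partial>M2)
        = (\<integral>\<^sup>+c. \<integral>\<^sup>+y. \<integral>\<^sup>+c'. Y (fst y, snd y, \<eta>) c * Y (fst y, snd y, \<eta>) c' \<partial>lborel \<partial>M2 \<partial>lborel)"
      by (rule pair_sigma_finite.Fubini'[OF psf_M2L, symmetric]) measurable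
    also have "\<dots> = (\<integral>\<^sup>+c. \<integral>\<^sup>+c'. \<integral>\<^sup>+y. Y (fst y, snd y, \<eta>) c * Y (fst y, snd y, \<eta>) c' \<partial>M2 \<partial>lborel \<partial>lborel)"
      by (rule nn_integral_cong) (rule pair_sigma_finite.Fubini'[OF psf_M2L, symmetric], measurable)
    finally show "(\<integral>\<^sup>+y. Jr (2 * s) \<eta> * (\<integral>\<^sup>+c. \<integral>\<^sup>+c'. Y (fst y, snd y, \<eta>) c * Y (fst y, snd y, \<eta>) c' \<partial>lborel \<partial>lborel) \<partial>M2)
        = Jr (2 * s) \<eta> * (\<integral>\<^sup>+c. \<integral>\<^sup>+c'. \<integral>\<^sup>+y. Y (fst y, snd y, \<eta>) c * Y (fst y, snd y, \<eta>) c' \<partial>M2 \<partial>lborel \<partial>lborel)" .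
  qed
  also have "\<dots> \<le> (\<integral>\<^sup>+\<eta>. Jr (2 * s) \<eta> * (\<integral>\<^sup>+c. \<integral>\<^sup>+c'. Kc * ((esqrt (A c) * esqrt (B (\<eta> - c))) * (esqrt (A c') * esqrt (B (\<eta> - c')))) \<partial>lborel \<partial>lborel) \<partial>lborel)"
    by (intro nn_integral_mono mult_left_mono S7) auto
  also have "\<dots> = (\<integral>\<^sup>+\<eta>. Jr (2 * s) \<eta> * (Kc * (\<integral>\<^sup>+c. esqrt (A c) * esqrt (B (\<eta> - c)) \<partial>lborel)^2) \<partial>lborel)"
  proof (rule nn_integral_cong)
    fix \<eta> :: real
    define u where "u c = esqrt (A c) * esqrt (B (\<eta> - c))" for c
    have mu[measurable]: "u \<in> borel_measurable borel" unfolding u_def[abs_def] by measurable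
    have "(\<integral>\<^sup>+c. \<integral>\<^sup>+c'. Kc * (u c * u c') \<partial>lborel \<partial>lborel) = (\<integral>\<^sup>+c. Kc * \<integral>\<^sup>+c'. u c * u c' \<partial>lborel \<partial>lborel)"
      by (rule nn_integral_cong) (rule nn_integral_cmult, measurable)
    also have "\<dots> = Kc * (\<integral>\<^sup>+c. \<integral>\<^sup>+c'. u c * u c' \<partial>lborel \<partial>lborel)"
      by (rule nn_integral_cmult) measurable
    also have "(\<integral>\<^sup>+c. \<integral>\<^sup>+c'. u c * u c' \<partial>lborel \<partial>lborel) = (\<integral>\<^sup>+c. u c \<partial>lborel)^2"
      by (rule sq_integral[symmetric]) measurable
    finally show "Jr (2 * s) \<eta> * (\<integral>\<^sup>+c. \<integral>\<^sup>+c'. Kc * ((esqrt (A c) * esqrt (B (\<eta> - c))) * (esqrt (A c') * esqrt (B (\<eta> - c')))) \<partial>lborel \<partial>lborel)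
        = Jr (2 * s) \<eta> * (Kc * (\<integral>\<^sup>+c. esqrt (A c) * esqrt (B (\<eta> - c)) \<partial>lborel)^2)"
      by (simp only: u_def)
  qed
  also have "\<dots> \<le> (\<integral>\<^sup>+\<eta>. Jr (2 * s) \<eta> * (Kc * ((\<integral>\<^sup>+c. A c \<partial>lborel) * (\<integral>\<^sup>+c. B c \<partial>lborel))) \<partial>lborel)"
    by (intro nn_integral_mono mult_left_mono S9) auto
  also have "\<dots> = IJ (2 * s) * (Kc * ((\<integral>\<^sup>+c. A c \<partial>lborel) * (\<integral>\<^sup>+c. B c \<partial>lborel)))"
    by (subst nn_integral_multc) (auto simp: IJ_def)
  finally show ?thesis by (simp add: FA GB Kc_def mult_ac)
qed

lemma phi_bound:
  fixes s0 s1 s2 a c d :: real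
  assumes "s0 \<ge> 0" "s1 \<ge> 0" "s2 \<ge> 0"
  shows "japan a powr (-s0) * japan c powr (-s1) * japan d powr (-s2)
    \<le> japan a powr (-(s0+s1+s2)) + japan c powr (-(s0+s1+s2)) + japan d powr (-(s0+s1+s2))"
proof -
  define m where "m = min (japan a) (min (japan c) (japan d))"
  have m0: "m > 0" unfolding m_def using japan_pos by simp
  have "japan a powr (-s0) \<le> m powr (-s0)" using assms m0 by (intro powr_mono2') (auto simp: m_def)
  moreover have "japan c powr (-s1) \<le> m powr (-s1)" using assms m0 by (intro powr_mono2') (auto simp: m_def)
  moreover have "japan d powr (-s2) \<le> m powr (-s2)" using assms m0 by (intro powr_mono2') (auto simp: m_def)
  ultimately have "japan a powr (-s0) * japan c powr (-s1) * japan d powr (-s2) \<le> m powr (-s0) * m powr (-s1) * m powr (-s2)"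
    by (intro mult_mono) auto
  also have "\<dots> = m powr (-(s0+s1+s2))" using m0 by (simp add: powr_add[symmetric] algebra_simps)
  also have "\<dots> \<le> japan a powr (-(s0+s1+s2)) + japan c powr (-(s0+s1+s2)) + japan d powr (-(s0+s1+s2))"
  proof -
    have "m = japan a \<or> m = japan c \<or> m = japan d" unfolding m_def by linarith
    then show ?thesis by (auto intro: add_increasing add_increasing2)
  qed
  finally show ?thesis .
qed

definition Wk :: "real \<Rightarrow> real \<Rightarrow> real \<Rightarrow> real \<Rightarrow> freq \<Rightarrow> freq \<Rightarrow> ennreal" where
  "Wk s0 s1 s2 b p q = kp b p q * ennreal (japan (snd (snd p)) powr (-s0) * japan (snd (snd q)) powr (-s1)
      * japan (snd (snd p) - snd (snd q)) powr (-s2))"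

lemma dif_dif[simp]: "dif p (dif p q) = q"
  by (simp add: dif_def)

lemma kk_sym: "kk b p (dif p q) = kk b p q"
proof -
  have "\<bar>2 * (fst (snd p) - fst (snd q)) - fst (snd p)\<bar> = \<bar>2 * fst (snd q) - fst (snd p)\<bar>"
    by (cases "2 * fst (snd q) - fst (snd p) \<ge> 0") auto
  moreover have "fst (snd (dif p q)) = fst (snd p) - fst (snd q)" by (simp add: dif_def)
  ultimately show ?thesis unfolding kk_def by (simp only: dif_dif mult_ac)
qed

lemma three_ennreal: "(3::ennreal) * (x + x + x) = 9 * x"
proof -
  have "x + x + x = (1 + 1 + 1) * (x::ennreal)" by (simp only: distrib_right mult_1)
  also have "(1 + 1 + 1 :: ennreal) = 3" by simp
  finally show ?thesis by (simp add: mult.assoc[symmetric])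
qed

lemma Main_abstract:
  fixes F G :: "freq \<Rightarrow> ennreal"
  assumes F[measurable]: "F \<in> borel_measurable B3" and G[measurable]: "G \<in> borel_measurable B3"
    and s: "s0 \<ge> 0" "s1 \<ge> 0" "s2 \<ge> 0"
  shows "(\<integral>\<^sup>+p. (\<integral>\<^sup>+q. Wk s0 s1 s2 b p q * F q * G (dif p q) \<partial>M3)^2 \<partial>M3)
    \<le> 9 * (ennreal (2/3) * IJ (2*b) * IJ (2*b) * IJ (2 * (s0+s1+s2))) * (\<integral>\<^sup>+q. (F q)^2 \<partial>M3) * (\<integral>\<^sup>+q. (G q)^2 \<partial>M3)"
proof -
  define s where "s = s0 + s1 + s2"
  define K0 where "K0 = ennreal (2/3) * IJ (2*b) * IJ (2*b) * IJ (2 * s)"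
  define NF where "NF = (\<integral>\<^sup>+q. (F q)^2 \<partial>M3)"
  define NG where "NG = (\<integral>\<^sup>+q. (G q)^2 \<partial>M3)"
  define T0 where "T0 p = (\<integral>\<^sup>+q. (kp b p q * Jr s (snd (snd p))) * F q * G (dif p q) \<partial>M3)" for p
  define T1 where "T1 p = (\<integral>\<^sup>+q. (kp b p q * Jr s (snd (snd q))) * F q * G (dif p q) \<partial>M3)" for p
  define T2 where "T2 p = (\<integral>\<^sup>+q. (kp b p q * Jr s (snd (snd p) - snd (snd q))) * F q * G (dif p q) \<partial>M3)" for p
  have [measurable]: "T0 \<in> borel_measurable B3" unfolding T0_def[abs_def] by measurable
  have [measurable]: "T1 \<in> borel_measurable B3" unfolding T1_def[abs_def] by measurable
  have [measurable]: "T2 \<in> borel_measurable B3" unfolding T2_def[abs_def] by measurable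
  have Wle: "Wk s0 s1 s2 b p q \<le> kp b p q * Jr s (snd (snd p)) + kp b p q * Jr s (snd (snd q)) + kp b p q * Jr s (snd (snd p) - snd (snd q))" for p q
  proof -
    have "ennreal (japan (snd (snd p)) powr (-s0) * japan (snd (snd q)) powr (-s1) * japan (snd (snd p) - snd (snd q)) powr (-s2))
      \<le> ennreal (japan (snd (snd p)) powr (-s) + japan (snd (snd q)) powr (-s) + japan (snd (snd p) - snd (snd q)) powr (-s))"
      unfolding s_def by (intro ennreal_leI phi_bound s)
    also have "\<dots> = Jr s (snd (snd p)) + Jr s (snd (snd q)) + Jr s (snd (snd p) - snd (snd q))"
      by (simp add: Jr_def ennreal_plus[symmetric] del: ennreal_plus)
    finally show ?thesis unfolding Wk_def by (simp only: distrib_left[symmetric] mult_left_mono zero_le)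
  qed
  have pt: "(\<integral>\<^sup>+q. Wk s0 s1 s2 b p q * F q * G (dif p q) \<partial>M3) \<le> T0 p + T1 p + T2 p" for p
  proof -
    have "(\<integral>\<^sup>+q. Wk s0 s1 s2 b p q * F q * G (dif p q) \<partial>M3)
      \<le> (\<integral>\<^sup>+q. (kp b p q * Jr s (snd (snd p))) * F q * G (dif p q) + (kp b p q * Jr s (snd (snd q))) * F q * G (dif p q)
          + (kp b p q * Jr s (snd (snd p) - snd (snd q))) * F q * G (dif p q) \<partial>M3)"
    proof (rule nn_integral_mono)
      fix q
      have "Wk s0 s1 s2 b p q * F q * G (dif p q) \<le> (kp b p q * Jr s (snd (snd p)) + kp b p q * Jr s (snd (snd q)) + kp b p q * Jr s (snd (snd p) - snd (snd q))) * F q * G (dif p q)"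
        by (intro mult_right_mono Wle) auto
      then show "Wk s0 s1 s2 b p q * F q * G (dif p q) \<le> (kp b p q * Jr s (snd (snd p))) * F q * G (dif p q) + (kp b p q * Jr s (snd (snd q))) * F q * G (dif p q)
          + (kp b p q * Jr s (snd (snd p) - snd (snd q))) * F q * G (dif p q)"
        by (simp only: distrib_right)
    qed
    also have "\<dots> = T0 p + T1 p + T2 p"
      unfolding T0_def T1_def T2_def
      apply (subst nn_integral_add)
      subgoal by measurable
      subgoal by measurable
      apply (subst nn_integral_add)
      subgoal by measurable
      subgoal by measurable
      by (rule refl)
    finally show ?thesis .
  qed
  have "(\<integral>\<^sup>+p. (\<integral>\<^sup>+q. Wk s0 s1 s2 b p q * F q * G (dif p q) \<partial>M3)^2 \<partial>M3)
      \<le> (\<integral>\<^sup>+p. 3 * ((T0 p)^2 + (T1 p)^2 + (T2 p)^2) \<partial>M3)"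
    by (rule nn_integral_mono) (rule order.trans[OF power_mono[OF pt] sum3_sq], simp)
  also have "\<dots> = 3 * ((\<integral>\<^sup>+p. (T0 p)^2 \<partial>M3) + (\<integral>\<^sup>+p. (T1 p)^2 \<partial>M3) + (\<integral>\<^sup>+p. (T2 p)^2 \<partial>M3))"
    apply (subst nn_integral_cmult)
    subgoal by measurable
    apply (subst nn_integral_add)
    subgoal by measurable
    subgoal by measurable
    apply (subst nn_integral_add)
    subgoal by measurable
    subgoal by measurable
    by (rule refl)
  also have "\<dots> \<le> 3 * (K0 * NF * NG + K0 * NF * NG + K0 * NF * NG)"
  proof -
    have b0: "(\<integral>\<^sup>+p. (T0 p)^2 \<partial>M3) \<le> K0 * NF * NG"
    proof -
      have "T0 p = Jr s (snd (snd p)) * (\<integral>\<^sup>+q. kp b p q * F q * G (dif p q) \<partial>M3)" for p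
      proof -
        have "T0 p = (\<integral>\<^sup>+q. Jr s (snd (snd p)) * (kp b p q * F q * G (dif p q)) \<partial>M3)"
          unfolding T0_def by (simp only: mult_ac)
        also have "\<dots> = Jr s (snd (snd p)) * (\<integral>\<^sup>+q. kp b p q * F q * G (dif p q) \<partial>M3)"
          by (rule nn_integral_cmult) measurable
        finally show ?thesis .
      qed
      then have "(\<integral>\<^sup>+p. (T0 p)^2 \<partial>M3) = (\<integral>\<^sup>+p. (Jr s (snd (snd p)) * (\<integral>\<^sup>+q. kp b p q * F q * G (dif p q) \<partial>M3))^2 \<partial>M3)"
        by simp
      also have "\<dots> \<le> K0 * NF * NG"
        unfolding K0_def NF_def NG_def by (rule J0) measurable
      finally show ?thesis .
    qed
    have b1: "(\<integral>\<^sup>+p. (T1 p)^2 \<partial>M3) \<le> K0 * NF * NG"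
      unfolding T1_def NF_def NG_def
    proof (rule CSL)
      fix p
      have "(\<integral>\<^sup>+q. (kp b p q * Jr s (snd (snd q)))^2 \<partial>M3) = (\<integral>\<^sup>+q. kk b p q * Jr (2 * s) (snd (snd q)) \<partial>M3)"
        by (simp only: power_mult_distrib kp_sq Jr_sq)
      also have "\<dots> \<le> K0" unfolding K0_def by (rule kk_weight_bound)
      finally show "(\<integral>\<^sup>+q. (kp b p q * Jr s (snd (snd q)))^2 \<partial>M3) \<le> K0" .
    qed measurable
    have b2: "(\<integral>\<^sup>+p. (T2 p)^2 \<partial>M3) \<le> K0 * NF * NG"
      unfolding T2_def NF_def NG_def
    proof (rule CSL)
      fix p
      define h where "h q = kk b p q * Jr (2 * s) (snd (snd q))" for q
      have mh: "h \<in> borel_measurable B3" unfolding h_def[abs_def] by measurable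
      have "(\<integral>\<^sup>+q. (kp b p q * Jr s (snd (snd p) - snd (snd q)))^2 \<partial>M3) = (\<integral>\<^sup>+q. h (dif p q) \<partial>M3)"
      proof (rule nn_integral_cong)
        fix q
        have "snd (snd (dif p q)) = snd (snd p) - snd (snd q)" by (simp add: dif_def)
        then show "(kp b p q * Jr s (snd (snd p) - snd (snd q)))^2 = h (dif p q)"
          unfolding h_def by (simp only: power_mult_distrib kp_sq Jr_sq kk_sym)
      qed
      also have "\<dots> = (\<integral>\<^sup>+q. h q \<partial>M3)" by (rule refl3[OF mh])
      also have "\<dots> \<le> K0" unfolding K0_def h_def by (rule kk_weight_bound)
      finally show "(\<integral>\<^sup>+q. (kp b p q * Jr s (snd (snd p) - snd (snd q)))^2 \<partial>M3) \<le> K0" .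
    qed measurable
    show ?thesis using b0 b1 b2 by (intro mult_left_mono add_mono) auto
  qed
  also have "\<dots> = 9 * K0 * NF * NG" by (simp only: three_ennreal mult.assoc)
  finally show ?thesis unfolding K0_def NF_def NG_def s_def .
qed

lemma norm_integral_le_nn:
  fixes h :: "'a \<Rightarrow> 'b::{banach, second_countable_topology}"
  shows "ennreal (norm (integral\<^sup>L M h)) \<le> (\<integral>\<^sup>+x. ennreal (norm (h x)) \<partial>M)"
proof (cases "integrable M h")
  case True then show ?thesis by (rule integral_norm_bound_ennreal)
next
  case False then show ?thesis by (simp add: not_integrable_integral_eq)
qed

definition Fw :: "real \<Rightarrow> real \<Rightarrow> (freq \<Rightarrow> complex) \<Rightarrow> freq \<Rightarrow> ennreal" where
  "Fw b s f q = ennreal (japan (sig q) powr b * japan (snd (snd q)) powr s * norm (f q))"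

definition Bx :: "real \<Rightarrow> (freq \<Rightarrow> complex) \<Rightarrow> (freq \<Rightarrow> complex) \<Rightarrow> freq \<Rightarrow> ennreal" where
  "Bx s0 f g p = ennreal (japan (snd (snd p)) powr (-s0) * sqrt \<bar>fst (snd p)\<bar>)
     * (\<integral>\<^sup>+q. ennreal (sqrt \<bar>2 * fst (snd q) - fst (snd p)\<bar> * norm (f q) * norm (g (dif p q))) \<partial>M3)"

lemma Fw_meas[measurable]: "f \<in> borel_measurable B3 \<Longrightarrow> Fw b s f \<in> borel_measurable B3"
  unfolding Fw_def[abs_def] by measurable

lemma Bx_eq:
  assumes [measurable]: "f \<in> borel_measurable B3" "g \<in> borel_measurable B3"
  shows "Bx s0 f g p = (\<integral>\<^sup>+q. Wk s0 s1 s2 b p q * Fw b s1 f q * Fw b s2 g (dif p q) \<partial>M3)"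
proof -
  have "Bx s0 f g p = (\<integral>\<^sup>+q. ennreal (japan (snd (snd p)) powr (-s0) * sqrt \<bar>fst (snd p)\<bar>) *
      ennreal (sqrt \<bar>2 * fst (snd q) - fst (snd p)\<bar> * norm (f q) * norm (g (dif p q))) \<partial>M3)"
    unfolding Bx_def by (rule nn_integral_cmult[symmetric]) measurable
  also have "\<dots> = (\<integral>\<^sup>+q. Wk s0 s1 s2 b p q * Fw b s1 f q * Fw b s2 g (dif p q) \<partial>M3)"
  proof (rule nn_integral_cong)
    fix q :: freq
    define \<xi> where "\<xi> = fst (snd p)"
    define \<xi>1 where "\<xi>1 = fst (snd q)"
    define \<eta> where "\<eta> = snd (snd p)"
    define \<eta>1 where "\<eta>1 = snd (snd q)"
    define a where "a = japan (sig q)"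
    define c where "c = japan (sig (dif p q))"
    have e2: "snd (snd (dif p q)) = \<eta> - \<eta>1" by (simp add: dif_def \<eta>_def \<eta>1_def)
    have pos: "a > 0" "c > 0" "japan \<eta> > 0" "japan \<eta>1 > 0" "japan (\<eta> - \<eta>1) > 0"
      by (simp_all add: a_def c_def japan_pos)
    have "kp b p q * ennreal (japan \<eta> powr (-s0) * japan \<eta>1 powr (-s1) * japan (\<eta> - \<eta>1) powr (-s2))
        * Fw b s1 f q * Fw b s2 g (dif p q)
      = ennreal ((sqrt \<bar>\<xi>\<bar> * sqrt \<bar>2 * \<xi>1 - \<xi>\<bar>) * a powr (-b) * c powr (-b)
          * (japan \<eta> powr (-s0) * japan \<eta>1 powr (-s1) * japan (\<eta> - \<eta>1) powr (-s2))
          * (a powr b * japan \<eta>1 powr s1 * norm (f q)) * (c powr b * japan (\<eta> - \<eta>1) powr s2 * norm (g (dif p q))))"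
      unfolding kp_def Fw_def Jr_def e2
      by (simp add: ennreal_mult'[symmetric] \<xi>_def \<xi>1_def \<eta>_def \<eta>1_def a_def c_def)
    also have "(sqrt \<bar>\<xi>\<bar> * sqrt \<bar>2 * \<xi>1 - \<xi>\<bar>) * a powr (-b) * c powr (-b)
          * (japan \<eta> powr (-s0) * japan \<eta>1 powr (-s1) * japan (\<eta> - \<eta>1) powr (-s2))
          * (a powr b * japan \<eta>1 powr s1 * norm (f q)) * (c powr b * japan (\<eta> - \<eta>1) powr s2 * norm (g (dif p q)))
        = (japan \<eta> powr (-s0) * sqrt \<bar>\<xi>\<bar>) * (sqrt \<bar>2 * \<xi>1 - \<xi>\<bar> * norm (f q) * norm (g (dif p q)))
          * ((a powr (-b) * a powr b) * (c powr (-b) * c powr b) * (japan \<eta>1 powr (-s1) * japan \<eta>1 powr s1)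
             * (japan (\<eta> - \<eta>1) powr (-s2) * japan (\<eta> - \<eta>1) powr s2))"
      by (simp only: ac_simps)
    also have "(a powr (-b) * a powr b) * (c powr (-b) * c powr b) * (japan \<eta>1 powr (-s1) * japan \<eta>1 powr s1)
             * (japan (\<eta> - \<eta>1) powr (-s2) * japan (\<eta> - \<eta>1) powr s2) = 1"
      using pos by (simp add: powr_add[symmetric])
    finally show "ennreal (japan (snd (snd p)) powr (-s0) * sqrt \<bar>fst (snd p)\<bar>) *
      ennreal (sqrt \<bar>2 * fst (snd q) - fst (snd p)\<bar> * norm (f q) * norm (g (dif p q)))
      = Wk s0 s1 s2 b p q * Fw b s1 f q * Fw b s2 g (dif p q)"
      unfolding Wk_def by (simp add: ennreal_mult'[symmetric] \<xi>_def \<xi>1_def \<eta>_def \<eta>1_def)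
  qed
  finally show ?thesis .
qed

lemma bil_x_le:
  "ennreal (norm (bil_x s0 f g p)) \<le> Bx s0 f g p"
proof -
  obtain \<tau> \<xi> \<eta> where p: "p = (\<tau>, \<xi>, \<eta>)" by (cases p) auto
  define h where "h q = (case q of (\<tau>1, \<xi>1, \<eta>1) \<Rightarrow>
        complex_of_real (sqrt \<bar>\<xi>1 - (\<xi> - \<xi>1)\<bar>) * f (\<tau>1, \<xi>1, \<eta>1)
          * g (\<tau> - \<tau>1, \<xi> - \<xi>1, \<eta> - \<eta>1))" for q
  define r where "r = japan \<eta> powr (- s0) * sqrt \<bar>\<xi>\<bar>"
  have r0: "r \<ge> 0" by (simp add: r_def)
  have "bil_x s0 f g p = complex_of_real r * integral\<^sup>L lborel h"
    unfolding bil_x_def p h_def r_def by simp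
  then have "ennreal (norm (bil_x s0 f g p)) = ennreal r * ennreal (norm (integral\<^sup>L lborel h))"
    using r0 by (simp add: norm_mult ennreal_mult)
  also have "\<dots> \<le> ennreal r * (\<integral>\<^sup>+q. ennreal (norm (h q)) \<partial>lborel)"
    by (intro mult_left_mono norm_integral_le_nn) simp
  also have "(\<integral>\<^sup>+q. ennreal (norm (h q)) \<partial>lborel) = (\<integral>\<^sup>+q. ennreal (sqrt \<bar>2 * fst (snd q) - fst (snd p)\<bar> * norm (f q) * norm (g (dif p q))) \<partial>M3)"
    unfolding lborel3
  proof (rule nn_integral_cong)
    fix q :: freq
    obtain \<tau>1 \<xi>1 \<eta>1 where q: "q = (\<tau>1, \<xi>1, \<eta>1)" by (cases q) auto
    have "\<xi>1 - (\<xi> - \<xi>1) = 2 * \<xi>1 - \<xi>" by simp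
    then show "ennreal (norm (h q)) = ennreal (sqrt \<bar>2 * fst (snd q) - fst (snd p)\<bar> * norm (f q) * norm (g (dif p q)))"
      by (simp add: h_def q p dif_def norm_mult)
  qed
  finally show ?thesis unfolding Bx_def r_def p by simp
qed

definition sw :: "freq \<Rightarrow> freq" where "sw q = (fst q, snd (snd q), fst (snd q))"

lemma sw_meas[measurable]: "sw \<in> B3 \<rightarrow>\<^sub>M B3" unfolding sw_def by measurable

lemma bil_y_le:
  assumes [measurable]: "f \<in> borel_measurable B3" "g \<in> borel_measurable B3"
  shows "ennreal (norm (bil_y s0 f g p)) \<le> Bx s0 (f \<circ> sw) (g \<circ> sw) (sw p)"
proof -
  obtain \<tau> \<xi> \<eta> where p: "p = (\<tau>, \<xi>, \<eta>)" by (cases p) auto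
  define h where "h q = (case q of (\<tau>1, \<xi>1, \<eta>1) \<Rightarrow>
        complex_of_real (sqrt \<bar>\<eta>1 - (\<eta> - \<eta>1)\<bar>) * f (\<tau>1, \<xi>1, \<eta>1)
          * g (\<tau> - \<tau>1, \<xi> - \<xi>1, \<eta> - \<eta>1))" for q
  define r where "r = japan \<xi> powr (- s0) * sqrt \<bar>\<eta>\<bar>"
  have r0: "r \<ge> 0" by (simp add: r_def)
  define \<Phi> where "\<Phi> q = ennreal (sqrt \<bar>2 * snd (snd q) - \<eta>\<bar> * norm (f q) * norm (g (dif p q)))" for q
  have m\<Phi>: "\<Phi> \<in> borel_measurable B3" unfolding \<Phi>_def[abs_def] by measurable
  have "bil_y s0 f g p = complex_of_real r * integral\<^sup>L lborel h"
    unfolding bil_y_def p h_def r_def by simp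
  then have "ennreal (norm (bil_y s0 f g p)) = ennreal r * ennreal (norm (integral\<^sup>L lborel h))"
    using r0 by (simp add: norm_mult ennreal_mult)
  also have "\<dots> \<le> ennreal r * (\<integral>\<^sup>+q. ennreal (norm (h q)) \<partial>lborel)"
    by (intro mult_left_mono norm_integral_le_nn) simp
  also have "(\<integral>\<^sup>+q. ennreal (norm (h q)) \<partial>lborel) = (\<integral>\<^sup>+q. \<Phi> q \<partial>M3)"
    unfolding lborel3
  proof (rule nn_integral_cong)
    fix q :: freq
    obtain \<tau>1 \<xi>1 \<eta>1 where q: "q = (\<tau>1, \<xi>1, \<eta>1)" by (cases q) auto
    have "\<eta>1 - (\<eta> - \<eta>1) = 2 * \<eta>1 - \<eta>" by simp
    then show "ennreal (norm (h q)) = \<Phi> q"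
      by (simp add: h_def q p dif_def norm_mult \<Phi>_def)
  qed
  also have "\<dots> = (\<integral>\<^sup>+q. \<Phi> (fst q, snd (snd q), fst (snd q)) \<partial>M3)"
    by (rule sw_inv[OF m\<Phi>, symmetric])
  also have "\<dots> = (\<integral>\<^sup>+q. ennreal (sqrt \<bar>2 * fst (snd q) - fst (snd (sw p))\<bar> * norm ((f \<circ> sw) q) * norm ((g \<circ> sw) (dif (sw p) q))) \<partial>M3)"
    by (rule nn_integral_cong) (simp add: \<Phi>_def sw_def dif_def p)
  finally show ?thesis unfolding Bx_def r_def by (simp add: sw_def p)
qed

lemma meas_lb: "f \<in> borel_measurable (lborel :: freq measure) \<Longrightarrow> f \<in> borel_measurable B3"
  by (rule meas3[THEN iffD1]) simp

lemma X0b_x: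
  "X0b_sq b (\<lambda>p. japan (snd (snd p)) powr s) f = (\<integral>\<^sup>+q. (Fw b s f q)^2 \<partial>M3)"
  unfolding X0b_sq_def lborel3
proof (rule nn_integral_cong)
  fix q :: freq
  show "ennreal ((japan (fst q - fst (snd q) ^ 3 - snd (snd q) ^ 3) powr b * japan (snd (snd q)) powr s * cmod (f q))\<^sup>2) = (Fw b s f q)\<^sup>2"
    unfolding Fw_def sig_def by (rule ennreal_power[symmetric]) simp
qed

lemma sig_sw: "sig (sw q) = sig q" by (simp add: sig_def sw_def)

lemma X0b_y:
  assumes [measurable]: "f \<in> borel_measurable B3"
  shows "X0b_sq b (\<lambda>p. japan (fst (snd p)) powr s) f = (\<integral>\<^sup>+q. (Fw b s (f \<circ> sw) q)^2 \<partial>M3)"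
proof -
  define \<Phi> where "\<Phi> q = (ennreal (japan (sig q) powr b * japan (fst (snd q)) powr s * norm (f q)))^2" for q
  have m: "\<Phi> \<in> borel_measurable B3" unfolding \<Phi>_def[abs_def] by measurable
  have "X0b_sq b (\<lambda>p. japan (fst (snd p)) powr s) f = (\<integral>\<^sup>+q. \<Phi> q \<partial>M3)"
    unfolding X0b_sq_def lborel3
  proof (rule nn_integral_cong)
    fix q :: freq
    show "ennreal ((japan (fst q - fst (snd q) ^ 3 - snd (snd q) ^ 3) powr b * japan (fst (snd q)) powr s * cmod (f q))\<^sup>2) = \<Phi> q"
      unfolding \<Phi>_def sig_def by (rule ennreal_power[symmetric]) simp
  qed
  also have "\<dots> = (\<integral>\<^sup>+q. \<Phi> (fst q, snd (snd q), fst (snd q)) \<partial>M3)"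
    by (rule sw_inv[OF m, symmetric])
  also have "\<dots> = (\<integral>\<^sup>+q. (Fw b s (f \<circ> sw) q)^2 \<partial>M3)"
  proof (rule nn_integral_cong)
    fix q :: freq
    have e: "(fst q, snd (snd q), fst (snd q)) = sw q" by (simp add: sw_def)
    have e2: "fst (snd (sw q)) = snd (snd q)" by (simp add: sw_def)
    show "\<Phi> (fst q, snd (snd q), fst (snd q)) = (Fw b s (f \<circ> sw) q)^2"
      unfolding e \<Phi>_def Fw_def sig_sw e2 by simp
  qed
  finally show ?thesis .
qed

lemma L2_x: "L2_sq (bil_x s0 f g) \<le> (\<integral>\<^sup>+p. (Bx s0 f g p)^2 \<partial>M3)"
  unfolding L2_sq_def lborel3
proof (rule nn_integral_mono)
  fix p
  have "ennreal ((norm (bil_x s0 f g p))\<^sup>2) = (ennreal (norm (bil_x s0 f g p)))^2" by (rule ennreal_power[symmetric]) simp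
  also have "\<dots> \<le> (Bx s0 f g p)^2" by (intro power_mono bil_x_le) simp
  finally show "ennreal ((norm (bil_x s0 f g p))\<^sup>2) \<le> (Bx s0 f g p)^2" .
qed

lemma L2_y:
  assumes [measurable]: "f \<in> borel_measurable B3" "g \<in> borel_measurable B3"
  shows "L2_sq (bil_y s0 f g) \<le> (\<integral>\<^sup>+p. (Bx s0 (f \<circ> sw) (g \<circ> sw) p)^2 \<partial>M3)"
proof -
  have [measurable]: "f \<circ> sw \<in> borel_measurable B3" by (rule measurable_comp[OF sw_meas assms(1)])
  have [measurable]: "g \<circ> sw \<in> borel_measurable B3" by (rule measurable_comp[OF sw_meas assms(2)])
  define h where "h p = (Bx s0 (f \<circ> sw) (g \<circ> sw) p)^2" for p
  have m: "h \<in> borel_measurable B3" unfolding h_def[abs_def] Bx_def by measurable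
  have "L2_sq (bil_y s0 f g) \<le> (\<integral>\<^sup>+p. h (sw p) \<partial>M3)"
    unfolding L2_sq_def lborel3 h_def
  proof (rule nn_integral_mono)
    fix p
    have "ennreal ((norm (bil_y s0 f g p))\<^sup>2) = (ennreal (norm (bil_y s0 f g p)))^2" by (rule ennreal_power[symmetric]) simp
    also have "\<dots> \<le> (Bx s0 (f \<circ> sw) (g \<circ> sw) (sw p))^2" by (intro power_mono bil_y_le[OF assms]) simp
    finally show "ennreal ((norm (bil_y s0 f g p))\<^sup>2) \<le> (Bx s0 (f \<circ> sw) (g \<circ> sw) (sw p))^2" .
  qed
  also have "\<dots> = (\<integral>\<^sup>+p. h p \<partial>M3)"
    unfolding sw_def by (rule sw_inv[OF m])
  finally show ?thesis unfolding h_def .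
qed

lemma main_bound:
  fixes f g :: "freq \<Rightarrow> complex"
  assumes [measurable]: "f \<in> borel_measurable B3" "g \<in> borel_measurable B3"
    and s: "s0 \<ge> 0" "s1 \<ge> 0" "s2 \<ge> 0"
  shows "(\<integral>\<^sup>+p. (Bx s0 f g p)^2 \<partial>M3)
    \<le> 9 * (ennreal (2/3) * IJ (2*b) * IJ (2*b) * IJ (2 * (s0+s1+s2))) * (\<integral>\<^sup>+q. (Fw b s1 f q)^2 \<partial>M3) * (\<integral>\<^sup>+q. (Fw b s2 g q)^2 \<partial>M3)"
proof -
  have "(\<integral>\<^sup>+p. (Bx s0 f g p)^2 \<partial>M3) = (\<integral>\<^sup>+p. (\<integral>\<^sup>+q. Wk s0 s1 s2 b p q * Fw b s1 f q * Fw b s2 g (dif p q) \<partial>M3)^2 \<partial>M3)"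
  proof (rule nn_integral_cong)
    fix p
    have e: "Bx s0 f g p = (\<integral>\<^sup>+q. Wk s0 s1 s2 b p q * Fw b s1 f q * Fw b s2 g (dif p q) \<partial>M3)"
      by (rule Bx_eq[OF assms(1,2)])
    show "(Bx s0 f g p)^2 = (\<integral>\<^sup>+q. Wk s0 s1 s2 b p q * Fw b s1 f q * Fw b s2 g (dif p q) \<partial>M3)^2"
      by (simp only: e)
  qed
  also have "\<dots> \<le> 9 * (ennreal (2/3) * IJ (2*b) * IJ (2*b) * IJ (2 * (s0+s1+s2))) * (\<integral>\<^sup>+q. (Fw b s1 f q)^2 \<partial>M3) * (\<integral>\<^sup>+q. (Fw b s2 g q)^2 \<partial>M3)"
    by (rule Main_abstract[OF Fw_meas[OF assms(1)] Fw_meas[OF assms(2)] s])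
  finally show ?thesis .
qed

theorem mainTheorem6:
  fixes s0 s1 s2 b :: real
  assumes "s0 \<ge> 0" "s1 \<ge> 0" "s2 \<ge> 0" "s0 + s1 + s2 > 1/2" "b > 1/2"
  shows "\<exists>C > 0.
    (\<forall>f g :: freq \<Rightarrow> complex.
       f \<in> borel_measurable lborel \<longrightarrow> g \<in> borel_measurable lborel \<longrightarrow>
       X0b_sq b (\<lambda>p. japan (snd (snd p)) powr s1) f < \<infinity> \<longrightarrow>
       X0b_sq b (\<lambda>p. japan (snd (snd p)) powr s2) g < \<infinity> \<longrightarrow>
       L2_sq (bil_x s0 f g) \<le> ennreal (C\<^sup>2)
          * X0b_sq b (\<lambda>p. japan (snd (snd p)) powr s1) f
          * X0b_sq b (\<lambda>p. japan (snd (snd p)) powr s2) g)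
  \<and> (\<forall>f g :: freq \<Rightarrow> complex.
       f \<in> borel_measurable lborel \<longrightarrow> g \<in> borel_measurable lborel \<longrightarrow>
       X0b_sq b (\<lambda>p. japan (fst (snd p)) powr s1) f < \<infinity> \<longrightarrow>
       X0b_sq b (\<lambda>p. japan (fst (snd p)) powr s2) g < \<infinity> \<longrightarrow>
       L2_sq (bil_y s0 f g) \<le> ennreal (C\<^sup>2)
          * X0b_sq b (\<lambda>p. japan (fst (snd p)) powr s1) f
          * X0b_sq b (\<lambda>p. japan (fst (snd p)) powr s2) g)"
proof -
  define K where "K = 9 * (ennreal (2/3) * IJ (2*b) * IJ (2*b) * IJ (2 * (s0+s1+s2)))"
  have fb: "IJ (2*b) < \<infinity>" using assms by (intro IJ_fin) simp
  have fs: "IJ (2 * (s0+s1+s2)) < \<infinity>" using assms by (intro IJ_fin) simp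
  have Kfin: "K < \<infinity>" unfolding K_def using fb fs
    by (simp add: ennreal_mult_less_top)
  define C where "C = sqrt (enn2real K) + 1"
  have C0: "C > 0" unfolding C_def by (simp add: add_nonneg_pos)
  have KC: "K \<le> ennreal (C\<^sup>2)"
  proof -
    have "enn2real K \<le> (sqrt (enn2real K))^2" by simp
    also have "\<dots> \<le> C^2" unfolding C_def by (intro power_mono) auto
    finally have "enn2real K \<le> C^2" .
    then have "ennreal (enn2real K) \<le> ennreal (C^2)" by (rule ennreal_leI)
    moreover have "ennreal (enn2real K) = K" using Kfin by simp
    ultimately show ?thesis by simp
  qed
  show ?thesis
  proof (intro exI[of _ C] conjI allI impI C0)
    fix f g :: "freq \<Rightarrow> complex"
    assume f: "f \<in> borel_measurable lborel" and g: "g \<in> borel_measurable lborel"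
    have [measurable]: "f \<in> borel_measurable B3" "g \<in> borel_measurable B3" using f g by (simp_all only: meas_lb)
    have "L2_sq (bil_x s0 f g) \<le> (\<integral>\<^sup>+p. (Bx s0 f g p)^2 \<partial>M3)" by (rule L2_x)
    also have "\<dots> \<le> K * (\<integral>\<^sup>+q. (Fw b s1 f q)^2 \<partial>M3) * (\<integral>\<^sup>+q. (Fw b s2 g q)^2 \<partial>M3)"
      unfolding K_def by (rule main_bound) (simp_all add: assms(1-3))
    also have "\<dots> \<le> ennreal (C\<^sup>2) * (\<integral>\<^sup>+q. (Fw b s1 f q)^2 \<partial>M3) * (\<integral>\<^sup>+q. (Fw b s2 g q)^2 \<partial>M3)"
      by (intro mult_right_mono KC) auto
    finally show "L2_sq (bil_x s0 f g) \<le> ennreal (C\<^sup>2)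
          * X0b_sq b (\<lambda>p. japan (snd (snd p)) powr s1) f
          * X0b_sq b (\<lambda>p. japan (snd (snd p)) powr s2) g"
      by (simp only: X0b_x)
  next
    fix f g :: "freq \<Rightarrow> complex"
    assume f: "f \<in> borel_measurable lborel" and g: "g \<in> borel_measurable lborel"
    have mf: "f \<circ> sw \<in> borel_measurable B3" by (rule measurable_comp[OF sw_meas meas_lb[OF f]])
    have mg: "g \<circ> sw \<in> borel_measurable B3" by (rule measurable_comp[OF sw_meas meas_lb[OF g]])
    have "L2_sq (bil_y s0 f g) \<le> (\<integral>\<^sup>+p. (Bx s0 (f \<circ> sw) (g \<circ> sw) p)^2 \<partial>M3)" by (rule L2_y[OF meas_lb[OF f] meas_lb[OF g]])
    also have "\<dots> \<le> K * (\<integral>\<^sup>+q. (Fw b s1 (f \<circ> sw) q)^2 \<partial>M3) * (\<integral>\<^sup>+q. (Fw b s2 (g \<circ> sw) q)^2 \<partial>M3)"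
      unfolding K_def by (rule main_bound[OF mf mg assms(1-3)])
    also have "\<dots> \<le> ennreal (C\<^sup>2) * (\<integral>\<^sup>+q. (Fw b s1 (f \<circ> sw) q)^2 \<partial>M3) * (\<integral>\<^sup>+q. (Fw b s2 (g \<circ> sw) q)^2 \<partial>M3)"
      by (intro mult_right_mono KC) auto
    finally show "L2_sq (bil_y s0 f g) \<le> ennreal (C\<^sup>2)
          * X0b_sq b (\<lambda>p. japan (fst (snd p)) powr s1) f
          * X0b_sq b (\<lambda>p. japan (fst (snd p)) powr s2) g"
      by (simp only: X0b_y[OF meas_lb[OF f]] X0b_y[OF meas_lb[OF g]])
  qed
qed

end
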